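(* Let $\kappa,w>0$ and $c\in\mathbb{R}\setminus\{0\}$, and let $L(\kappa,w,c):\mathcal{D}\to\mathcal{X}$ be the operator of the context. Then \[ \sigma(L(\kappa,w,c))=\{z\in\mathbb{C}:\det M(z;\kappa,w,c)=0\},\qquad \det M(z;\kappa,w,c)=c^4z^4+c^2(1+\kappa)(1+w)z^2+2\kappa w(1-\cosh(2z)). \] Suppose moreover $|c|>1$. Then: (i) the spectrum consists entirely of eigenvalues; (ii) each eigenvalue is an isolated point of the spectrum, and its algebraic multiplicity equals its multiplicity as a zero of the entire function $z\mapsto\det M(z;\kappa,w,c)$; (iii) each eigenvalue is geometrically simple; (iv) if $z\in\sigma(L(\kappa,w,c))$ then $\overline z\in\sigma(L(\kappa,w,c))$ and $-z\in\sigma(L(\kappa,w,c))$; (v) for $z\in\rho(L(\kappa,w,c))$ and $U=(p_1,p_2,\xi_1,\xi_2,P_1,P_2)\in\mathcal{X}$, writing $R(z)U=(zI-L(\kappa,w,c))^{-1}U$ and $d(z)=\det M(z;\kappa,w,c)$, \begin{align*} (R(z)U)_1&=\frac{c^2z^2+w(1+\kappa)}{d(z)}\big(c^2\xi_1+c^2zp_1+\mathcal{I}_z[P_2](1)+\kappa\mathcal{I}_z[P_2](-1)\big)\\&\quad+\frac{e^z+\kappa e^{-z}}{d(z)}\big(c^2\xi_2+c^2zp_2+\kappa w\mathcal{I}_z[P_1](1)+w\mathcal{I}_z[P_1](-1)\big),\\ (R(z)U)_2&=\frac{w(\kappa e^z+e^{-z})}{d(z)}\big(c^2\xi_1+c^2zp_1+\mathcal{I}_z[P_2](1)+\kappa\mathcal{I}_z[P_2](-1)\big)\\&\quad+\frac{c^2z^2+1+\kappa}{d(z)}\big(c^2\xi_2+c^2zp_2+\kappa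 w\mathcal{I}_z[P_1](1)+w\mathcal{I}_z[P_1](-1)\big),\\ (R(z)U)_3&=z(R(z)U)_1-p_1,\qquad (R(z)U)_4=z(R(z)U)_2-p_2,\\ (R(z)U)_5(v)&=e^{zv}(R(z)U)_1+\mathcal{I}_z[P_1](v),\qquad (R(z)U)_6(v)=e^{zv}(R(z)U)_2+\mathcal{I}_z[P_2](v),\quad -1\le v\le1, \end{align*} where $\mathcal{I}_z[P](v):=-\int_0^ve^{z(v-s)}P(s)\,ds$.
   Context: Let $\mathcal{X}=\{(p_1,p_2,\xi_1,\xi_2,P_1,P_2)\in\mathbb{R}^4\times C([-1,1])\times C([-1,1]):P_1(0)=p_1,\ P_2(0)=p_2\}$ with the maximum norm, and $\mathcal{D}=\mathcal{X}\cap(\mathbb{R}^4\times C^1([-1,1])\times C^1([-1,1]))$; spectral notions refer to the complexified spaces and operator, $L(\kappa,w,c)$ being regarded as an operator in $\mathcal{X}$ with domain $\mathcal{D}$; $(U)_k$ denotes the $k$th component of $U$. For $U=(p_1,p_2,\xi_1,\xi_2,P_1,P_2)\in\mathcal{D}$, \[ L(\kappa,w,c)U=\Big(\xi_1,\ \xi_2,\ c^{-2}\big[-(1+\kappa)p_1+P_2(1)+\kappa P_2(-1)\big],\ c^{-2}\big[-w(1+\kappa)p_2+w(\kappa P_1(1)+P_1(-1))\big],\ P_1',\ P_2'\Big). \] $M(z;\kappa,w,c)$ is the $2\times2$ matrix with rows $\big(c^2z^2+1+\kappa,\ -(e^z+\kappa e^{-z})\big)$ and $\big(-w(\kappa e^z+e^{-z}),\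 c^2z^2+w(1+\kappa)\big)$. *)

theory Defs
  imports "HOL-Complex_Analysis.Complex_Analysis"
begin

text \<open>Elements of the complexified state space: (p1,p2,xi1,xi2,P1,P2).
  The function components are only relevant on [-1,1]; elements of the
  space are normalised to vanish outside [-1,1].\<close>

record st =
  p1 :: complex
  p2 :: complex
  xi1 :: complex
  xi2 :: complex
  P1 :: "real \<Rightarrow> complex"
  P2 :: "real \<Rightarrow> complex"

definition Xsp :: "st set" where
  "Xsp = {U. continuous_on {-1..1} (P1 U) \<and> continuous_on {-1..1} (P2 U)
            \<and> P1 U 0 = p1 U \<and> P2 U 0 = p2 U
            \<and> (\<forall>v. v \<notin> {-1..1} \<longrightarrow> P1 U v = 0 \<and> P2 U v = 0)}"

definition C1_on :: "(real \<Rightarrow> complex) \<Rightarrow> bool" where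
  "C1_on P \<longleftrightarrow> (\<forall>v\<in>{-1..1}. P differentiable (at v within {-1..1}))
      \<and> continuous_on {-1..1} (\<lambda>v. vector_derivative P (at v within {-1..1}))"

definition Dsp :: "st set" where
  "Dsp = {U \<in> Xsp. C1_on (P1 U) \<and> C1_on (P2 U)}"

definition dI :: "(real \<Rightarrow> complex) \<Rightarrow> real \<Rightarrow> complex" where
  "dI P v = (if v \<in> {-1..1} then vector_derivative P (at v within {-1..1}) else 0)"

definition Lop :: "real \<Rightarrow> real \<Rightarrow> real \<Rightarrow> st \<Rightarrow> st" where
  "Lop \<kappa> w c U = \<lparr> p1 = xi1 U, p2 = xi2 U,
     xi1 = (- (1 + of_real \<kappa>) * p1 U + P2 U 1 + of_real \<kappa> * P2 U (-1)) / (of_real c)\<^sup>2,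
     xi2 = (- of_real w * (1 + of_real \<kappa>) * p2 U
            + of_real w * (of_real \<kappa> * P1 U 1 + P1 U (-1))) / (of_real c)\<^sup>2,
     P1 = dI (P1 U), P2 = dI (P2 U) \<rparr>"

definition stzero :: st where
  "stzero = \<lparr> p1 = 0, p2 = 0, xi1 = 0, xi2 = 0, P1 = (\<lambda>_. 0), P2 = (\<lambda>_. 0) \<rparr>"

definition stadd :: "st \<Rightarrow> st \<Rightarrow> st" where
  "stadd U V = \<lparr> p1 = p1 U + p1 V, p2 = p2 U + p2 V, xi1 = xi1 U + xi1 V,
     xi2 = xi2 U + xi2 V, P1 = (\<lambda>v. P1 U v + P1 V v), P2 = (\<lambda>v. P2 U v + P2 V v) \<rparr>"

definition stscale :: "complex \<Rightarrow> st \<Rightarrow> st" where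
  "stscale a U = \<lparr> p1 = a * p1 U, p2 = a * p2 U, xi1 = a * xi1 U,
     xi2 = a * xi2 U, P1 = (\<lambda>v. a * P1 U v), P2 = (\<lambda>v. a * P2 U v) \<rparr>"

definition zmL :: "complex \<Rightarrow> real \<Rightarrow> real \<Rightarrow> real \<Rightarrow> st \<Rightarrow> st" where
  "zmL z \<kappa> w c U = stadd (stscale z U) (stscale (-1) (Lop \<kappa> w c U))"

definition normX :: "st \<Rightarrow> real" where
  "normX U = Max {norm (p1 U), norm (p2 U), norm (xi1 U), norm (xi2 U),
                  Sup ((\<lambda>v. norm (P1 U v)) ` {-1..1}), Sup ((\<lambda>v. norm (P2 U v)) ` {-1..1})}"

definition resolvent_set :: "real \<Rightarrow> real \<Rightarrow> real \<Rightarrow> complex set" where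
  "resolvent_set \<kappa> w c = {z.
     (\<forall>f\<in>Xsp. \<exists>!U. U \<in> Dsp \<and> zmL z \<kappa> w c U = f)
     \<and> (\<exists>C. \<forall>U\<in>Dsp. zmL z \<kappa> w c U \<in> Xsp \<longrightarrow> normX U \<le> C * normX (zmL z \<kappa> w c U))}"

definition spectrum_L :: "real \<Rightarrow> real \<Rightarrow> real \<Rightarrow> complex set" where
  "spectrum_L \<kappa> w c = - resolvent_set \<kappa> w c"

definition eigenvalue_L :: "real \<Rightarrow> real \<Rightarrow> real \<Rightarrow> complex \<Rightarrow> bool" where
  "eigenvalue_L \<kappa> w c z \<longleftrightarrow> (\<exists>U\<in>Dsp. U \<noteq> stzero \<and> Lop \<kappa> w c U = stscale z U)"

text \<open>kerpow k = ker (zI - L)^k (as an operator with its natural iterated domain).\<close>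
primrec kerpow :: "real \<Rightarrow> real \<Rightarrow> real \<Rightarrow> complex \<Rightarrow> nat \<Rightarrow> st set" where
  "kerpow \<kappa> w c z 0 = {stzero}"
| "kerpow \<kappa> w c z (Suc k) = {U \<in> Dsp. zmL z \<kappa> w c U \<in> kerpow \<kappa> w c z k}"

definition gen_eigenspace :: "real \<Rightarrow> real \<Rightarrow> real \<Rightarrow> complex \<Rightarrow> st set" where
  "gen_eigenspace \<kappa> w c z = (\<Union>k. kerpow \<kappa> w c z k)"

definition lincomb :: "(nat \<Rightarrow> complex) \<Rightarrow> (nat \<Rightarrow> st) \<Rightarrow> nat \<Rightarrow> st" where
  "lincomb a b n = foldr (\<lambda>i U. stadd (stscale (a i) (b i)) U) [0..<n] stzero"

definition has_dim :: "st set \<Rightarrow> nat \<Rightarrow> bool" where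
  "has_dim S n \<longleftrightarrow> (\<exists>b. (\<forall>i<n. b i \<in> S)
      \<and> (\<forall>a. lincomb a b n = stzero \<longrightarrow> (\<forall>i<n. a i = 0))
      \<and> (\<forall>U\<in>S. \<exists>a. U = lincomb a b n))"

definition algebraic_multiplicity_is :: "real \<Rightarrow> real \<Rightarrow> real \<Rightarrow> complex \<Rightarrow> nat \<Rightarrow> bool" where
  "algebraic_multiplicity_is \<kappa> w c z n \<longleftrightarrow> has_dim (gen_eigenspace \<kappa> w c z) n"

definition geometrically_simple :: "real \<Rightarrow> real \<Rightarrow> real \<Rightarrow> complex \<Rightarrow> bool" where
  "geometrically_simple \<kappa> w c z \<longleftrightarrow> has_dim (kerpow \<kappa> w c z 1) 1"

definition Mmat :: "complex \<Rightarrow> real \<Rightarrow> real \<Rightarrow> real \<Rightarrow> complex^2^2" where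
  "Mmat z \<kappa> w c = vector [
     vector [(of_real c)\<^sup>2 * z\<^sup>2 + 1 + of_real \<kappa>, - (exp z + of_real \<kappa> * exp (- z))],
     vector [- (of_real w * (of_real \<kappa> * exp z + exp (- z))),
             (of_real c)\<^sup>2 * z\<^sup>2 + of_real w * (1 + of_real \<kappa>)]]"

definition detM :: "real \<Rightarrow> real \<Rightarrow> real \<Rightarrow> complex \<Rightarrow> complex" where
  "detM \<kappa> w c z = det (Mmat z \<kappa> w c)"

definition Iz :: "complex \<Rightarrow> (real \<Rightarrow> complex) \<Rightarrow> real \<Rightarrow> complex" where
  "Iz z P v = - (if 0 \<le> v then integral {0..v} (\<lambda>s. exp (z * of_real (v - s)) * P s)
                 else - integral {v..0} (\<lambda>s. exp (z * of_real (v - s)) * P s))"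

definition Res :: "real \<Rightarrow> real \<Rightarrow> real \<Rightarrow> complex \<Rightarrow> st \<Rightarrow> st" where
  "Res \<kappa> w c z U = (THE V. V \<in> Dsp \<and> zmL z \<kappa> w c V = U)"

end

theory Submission
  imports Defs
begin

definition m11 :: "real \<Rightarrow> real \<Rightarrow> real \<Rightarrow> complex \<Rightarrow> complex" where
  "m11 \<kappa> w c z = (of_real c)\<^sup>2 * z\<^sup>2 + 1 + of_real \<kappa>"
definition m12 :: "real \<Rightarrow> real \<Rightarrow> real \<Rightarrow> complex \<Rightarrow> complex" where
  "m12 \<kappa> w c z = - (exp z + of_real \<kappa> * exp (- z))"
definition m21 :: "real \<Rightarrow> real \<Rightarrow> real \<Rightarrow> complex \<Rightarrow> complex" where
  "m21 \<kappa> w c z = - (of_real w * (of_real \<kappa> * exp z + exp (- z)))"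
definition m22 :: "real \<Rightarrow> real \<Rightarrow> real \<Rightarrow> complex \<Rightarrow> complex" where
  "m22 \<kappa> w c z = (of_real c)\<^sup>2 * z\<^sup>2 + of_real w * (1 + of_real \<kappa>)"

lemma detM_eq: "detM \<kappa> w c z = m11 \<kappa> w c z * m22 \<kappa> w c z - m12 \<kappa> w c z * m21 \<kappa> w c z"
  unfolding detM_def Mmat_def det_2 m11_def m12_def m21_def m22_def
  by (simp only: vector_2)
lemma detM_formula: "detM \<kappa> w c z = (of_real c)^4 * z^4
             + (of_real c)\<^sup>2 * (1 + of_real \<kappa>) * (1 + of_real w) * z\<^sup>2
             + 2 * of_real \<kappa> * of_real w * (1 - cosh (2 * z))"
proof -
  define X where "X = exp z"
  define Y where "Y = exp (-z)"
  have XY: "X * Y = 1" unfolding X_def Y_def by (simp add: exp_minus)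
  have e2: "exp (2*z) = X*X" unfolding X_def by (metis exp_add mult_2)
  have e3: "exp (-(2*z)) = Y*Y" unfolding Y_def by (metis exp_add mult_2 minus_add_distrib)
  have ch: "cosh (2*z) = (X*X + Y*Y)/2"
    unfolding cosh_def e2 e3 by (simp add: scaleR_conv_of_real)
  have "detM \<kappa> w c z = m11 \<kappa> w c z * m22 \<kappa> w c z - m12 \<kappa> w c z * m21 \<kappa> w c z"
    by (rule detM_eq)
  also have "\<dots> = (of_real c)^4 * z^4
             + (of_real c)\<^sup>2 * (1 + of_real \<kappa>) * (1 + of_real w) * z\<^sup>2
             + 2 * of_real \<kappa> * of_real w - of_real \<kappa> * of_real w * (X*X+Y*Y)
             + of_real w * (1 + (of_real \<kappa>)\<^sup>2) * (1 - X*Y)"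
    unfolding m11_def m12_def m21_def m22_def X_def[symmetric] Y_def[symmetric]
    by algebra
  also have "\<dots> = (of_real c)^4 * z^4
             + (of_real c)\<^sup>2 * (1 + of_real \<kappa>) * (1 + of_real w) * z\<^sup>2
             + 2 * of_real \<kappa> * of_real w * (1 - cosh (2 * z))"
    unfolding ch XY by (simp add: right_diff_distrib)
  finally show ?thesis .
qed

lemma Icc_m11_cases: "(v::real) \<in> {-1..1} \<Longrightarrow> -1 \<le> v \<and> v \<le> 1" by auto

lemma dI_eq:
  assumes "v \<in> {-1..1}" "(P has_vector_derivative D) (at v within {-1..1})"
  shows "dI P v = D"
  using assms vector_derivative_within_closed_interval[of "-1" 1 v P D]
  unfolding dI_def by simp

lemma C1_deriv:
  assumes "C1_on P" "v \<in> {-1..1}"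
  shows "(P has_vector_derivative dI P v) (at v within {-1..1})"
  using assms unfolding C1_on_def dI_def
  by (auto intro!: vector_derivative_works[THEN iffD1])

lemma C1_dI_cont:
  assumes "C1_on P"
  shows "continuous_on {-1..1} (dI P)"
proof -
  have "continuous_on {-1..1} (\<lambda>v. vector_derivative P (at v within {-1..1}))"
    using assms unfolding C1_on_def by auto
  then show ?thesis
    by (rule continuous_on_eq) (simp add: dI_def)
qed

lemma C1_onI:
  assumes "\<And>v. v \<in> {-1..1} \<Longrightarrow> (P has_vector_derivative D v) (at v within {-1..1})"
    "continuous_on {-1..1} D"
  shows "C1_on P"
  unfolding C1_on_def
proof
  show "\<forall>v\<in>{-1..1}. P differentiable at v within {-1..1}"
    using assms(1) unfolding differentiable_def has_vector_derivative_def by blast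
  have "continuous_on {-1..1} D" by fact
  then show "continuous_on {-1..1} (\<lambda>v. vector_derivative P (at v within {-1..1}))"
    by (rule continuous_on_eq) (use assms(1) vector_derivative_within_closed_interval[of "-1" 1] in force)
qed

lemma cont_of_deriv:
  assumes "\<And>v. v \<in> {-1..1} \<Longrightarrow> (P has_vector_derivative D v) (at v within {-1..1})"
  shows "continuous_on {-1..1} P"
  unfolding continuous_on_eq_continuous_within
  using assms has_vector_derivative_continuous by blast

lemma C1_cont:
  assumes "C1_on P"
  shows "continuous_on {-1..1} P"
  using cont_of_deriv[OF C1_deriv[OF assms]] by blast

lemma exp_real_deriv:
  fixes z :: complex
  shows "((\<lambda>s::real. exp (z * of_real s)) has_vector_derivative z * exp (z * of_real v)) (at v within S)"
proof -
  have "((\<lambda>x. exp (z * x)) has_field_derivative z * exp (z * of_real v)) (at (of_real v))"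
    by (auto intro!: derivative_eq_intros)
  from has_vector_derivative_real_field[OF this] show ?thesis .
qed

lemma exp_split: fixes z :: complex shows "exp (z * of_real (v - s)) = exp (z * of_real v) * exp (- (z * of_real s))"
  by (simp add: of_real_diff right_diff_distrib exp_diff exp_minus divide_inverse)

lemma ode_sol:
  assumes der: "\<And>v. v \<in> {-1..1} \<Longrightarrow> (P has_vector_derivative D v) (at v within {-1..1})"
    and fc: "continuous_on {-1..1} f"
    and feq: "\<And>v. v \<in> {-1..1} \<Longrightarrow> f v = z * P v - D v"
    and v: "v \<in> {-1..1}"
  shows "P v = exp (z * of_real v) * P 0 + Iz z f v"
proof -
  define g where "g s = exp (- (z * of_real s)) * P s" for s
  have gder: "(g has_vector_derivative (- (exp (- (z * of_real s)) * f s))) (at s within {-1..1})"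
    if s: "s \<in> {-1..1}" for s
  proof -
    have e: "((\<lambda>s::real. exp ((-z) * of_real s)) has_vector_derivative (-z) * exp ((-z) * of_real s)) (at s within {-1..1})"
      by (rule exp_real_deriv)
    have "(g has_vector_derivative (exp ((-z) * of_real s) * D s + (-z) * exp ((-z) * of_real s) * P s)) (at s within {-1..1})"
      unfolding g_def using has_vector_derivative_mult[OF e der[OF s]] by simp
    moreover have "exp ((-z) * of_real s) * D s + (-z) * exp ((-z) * of_real s) * P s = - (exp (- (z * of_real s)) * f s)"
      by (subst feq[OF s]) (simp add: algebra_simps)
    ultimately show ?thesis by simp
  qed
  have hc: "continuous_on {-1..1} (\<lambda>s. exp (- (z * of_real s)) * f s)"
    by (intro continuous_intros fc)
  have integ_eq: "integral S (\<lambda>s. exp (z * of_real (v - s)) * f s)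
      = exp (z * of_real v) * integral S (\<lambda>s. exp (- (z * of_real s)) * f s)" for S
    by (simp only: exp_split mult.assoc integral_mult_right)
  have ev: "exp (z * of_real v) * exp (- (z * of_real v)) = 1" by (simp add: exp_minus)
  show ?thesis
  proof (cases "0 \<le> v")
    case True
    have "((\<lambda>s. - (exp (- (z * of_real s)) * f s)) has_integral g v - g 0) {0..v}"
    proof (rule fundamental_theorem_of_calculus)
      show "0 \<le> v" by fact
      fix x assume "x \<in> {0..v}"
      then have x: "x \<in> {-1..1}" and sub: "{0..v} \<subseteq> {-1..1::real}" using v by auto
      show "(g has_vector_derivative - (exp (- (z * of_real x)) * f x)) (at x within {0..v})"
        by (rule has_vector_derivative_within_subset[OF gder[OF x] sub])
    qed
    then have "- integral {0..v} (\<lambda>s. exp (- (z * of_real s)) * f s) = g v - g 0"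
      by (metis integral_unique integral_neg)
    then have "integral {0..v} (\<lambda>s. exp (- (z * of_real s)) * f s) = g 0 - g v"
      by (metis minus_diff_eq minus_minus)
    then have I: "integral {0..v} (\<lambda>s. exp (- (z * of_real s)) * f s) = P 0 - exp (- (z * of_real v)) * P v"
      by (simp add: g_def)
    have "Iz z f v = - (exp (z * of_real v) * integral {0..v} (\<lambda>s. exp (- (z * of_real s)) * f s))"
      using True unfolding Iz_def integ_eq by simp
    also have "\<dots> = exp (z * of_real v) * exp (- (z * of_real v)) * P v - exp (z * of_real v) * P 0"
      unfolding I by (simp add: algebra_simps)
    finally show ?thesis unfolding ev by simp
  next
    case False
    have "((\<lambda>s. - (exp (- (z * of_real s)) * f s)) has_integral g 0 - g v) {v..0}"
    proof (rule fundamental_theorem_of_calculus)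
      show "v \<le> 0" using False by simp
      fix x assume "x \<in> {v..0}"
      then have x: "x \<in> {-1..1}" and sub: "{v..0} \<subseteq> {-1..1::real}" using v by auto
      show "(g has_vector_derivative - (exp (- (z * of_real x)) * f x)) (at x within {v..0})"
        by (rule has_vector_derivative_within_subset[OF gder[OF x] sub])
    qed
    then have "- integral {v..0} (\<lambda>s. exp (- (z * of_real s)) * f s) = g 0 - g v"
      by (metis integral_unique integral_neg)
    then have "integral {v..0} (\<lambda>s. exp (- (z * of_real s)) * f s) = g v - g 0"
      by (metis minus_diff_eq minus_minus)
    then have I: "integral {v..0} (\<lambda>s. exp (- (z * of_real s)) * f s) = exp (- (z * of_real v)) * P v - P 0"
      by (simp add: g_def)
    have "Iz z f v = exp (z * of_real v) * integral {v..0} (\<lambda>s. exp (- (z * of_real s)) * f s)"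
      using False unfolding Iz_def integ_eq by simp
    also have "\<dots> = exp (z * of_real v) * exp (- (z * of_real v)) * P v - exp (z * of_real v) * P 0"
      unfolding I by (simp add: algebra_simps)
    finally show ?thesis unfolding ev by simp
  qed
qed


lemma zmL_simps:
  "p1 (zmL z \<kappa> w c U) = z * p1 U - xi1 U"
  "p2 (zmL z \<kappa> w c U) = z * p2 U - xi2 U"
  "xi1 (zmL z \<kappa> w c U) = z * xi1 U - (- (1 + of_real \<kappa>) * p1 U + P2 U 1 + of_real \<kappa> * P2 U (-1)) / (of_real c)\<^sup>2"
  "xi2 (zmL z \<kappa> w c U) = z * xi2 U - (- of_real w * (1 + of_real \<kappa>) * p2 U
            + of_real w * (of_real \<kappa> * P1 U 1 + P1 U (-1))) / (of_real c)\<^sup>2"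
  "P1 (zmL z \<kappa> w c U) = (\<lambda>v. z * P1 U v - dI (P1 U) v)"
  "P2 (zmL z \<kappa> w c U) = (\<lambda>v. z * P2 U v - dI (P2 U) v)"
  unfolding zmL_def stadd_def stscale_def Lop_def by (simp_all add: minus_divide_left algebra_simps, simp_all only: add_divide_distrib[symmetric], simp_all add: algebra_simps)

lemma Iz_0[simp]: "Iz z f 0 = 0"
  unfolding Iz_def by simp

lemma Iz_zero_fun[simp]: "Iz z (\<lambda>_. 0) v = 0"
  unfolding Iz_def by simp

lemma Iz_alt:
  fixes z :: complex
  assumes fc: "continuous_on {-1..1} f" and v: "v \<in> {-1..1}"
  shows "Iz z f v = - (exp (z * of_real v) *
     (integral {-1..v} (\<lambda>s. exp (- (z * of_real s)) * f s) - integral {-1..0} (\<lambda>s. exp (- (z * of_real s)) * f s)))"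
proof -
  define h where "h s = exp (- (z * of_real s)) * f s" for s
  have hc: "continuous_on {-1..1} h" unfolding h_def by (intro continuous_intros fc)
  have integ_eq: "integral S (\<lambda>s. exp (z * of_real (v - s)) * f s)
      = exp (z * of_real v) * integral S h" for S
    unfolding h_def by (simp only: exp_split mult.assoc integral_mult_right)
  show ?thesis
  proof (cases "0 \<le> v")
    case True
    have "h integrable_on {-1..v}"
      by (rule integrable_continuous_real) (rule continuous_on_subset[OF hc], use v in auto)
    then have "integral {-1..0} h + integral {0..v} h = integral {-1..v} h"
      using True by (intro Henstock_Kurzweil_Integration.integral_combine) auto
    then have e: "integral {0..v} h = integral {-1..v} h - integral {-1..0} h"
      by (simp add: algebra_simps)
    show ?thesis using True unfolding Iz_def integ_eq e h_def by simp
  next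
    case False
    have "h integrable_on {-1..0}"
      by (rule integrable_continuous_real) (rule continuous_on_subset[OF hc], auto)
    then have "integral {-1..v} h + integral {v..0} h = integral {-1..0} h"
      using False v by (intro Henstock_Kurzweil_Integration.integral_combine) auto
    then have e: "integral {v..0} h = - (integral {-1..v} h - integral {-1..0} h)"
      by (simp add: algebra_simps)
    show ?thesis using False unfolding Iz_def integ_eq e h_def by (simp add: algebra_simps)
  qed
qed

lemma Iz_deriv:
  fixes z :: complex
  assumes fc: "continuous_on {-1..1} f" and v: "v \<in> {-1..1}"
  shows "(Iz z f has_vector_derivative (z * Iz z f v - f v)) (at v within {-1..1})"
proof -
  define h where "h s = exp (- (z * of_real s)) * f s" for s
  define J where "J u = integral {-1..u} h" for u
  have hc: "continuous_on {-1..1} h" unfolding h_def by (intro continuous_intros fc)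
  have Jd: "(J has_vector_derivative h v) (at v within {-1..1})"
    unfolding J_def using integral_has_vector_derivative[OF hc v] .
  have Jd': "((\<lambda>u. J u - J 0) has_vector_derivative h v) (at v within {-1..1})"
    using has_vector_derivative_diff[OF Jd has_vector_derivative_const[of "J 0"]] by simp
  have ed: "((\<lambda>s::real. exp (z * of_real s)) has_vector_derivative z * exp (z * of_real v)) (at v within {-1..1})"
    by (rule exp_real_deriv)
  have d1: "((\<lambda>u. - (exp (z * of_real u) * (J u - J 0))) has_vector_derivative
      - (exp (z * of_real v) * h v + z * exp (z * of_real v) * (J v - J 0))) (at v within {-1..1})"
    using has_vector_derivative_minus[OF has_vector_derivative_mult[OF ed Jd']] by simp
  have ev: "exp (z * of_real v) * exp (- (z * of_real v)) = 1" by (simp add: exp_minus)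
  have eqI: "Iz z f u = - (exp (z * of_real u) * (J u - J 0))" if "u \<in> {-1..1}" for u
    unfolding J_def h_def using Iz_alt[OF fc that] by simp
  have val: "- (exp (z * of_real v) * h v + z * exp (z * of_real v) * (J v - J 0)) = z * Iz z f v - f v"
  proof -
    have "exp (z * of_real v) * h v = f v"
      unfolding h_def by (simp add: mult.assoc[symmetric] ev)
    then show ?thesis unfolding eqI[OF v] by (simp add: algebra_simps)
  qed
  show ?thesis
    using has_vector_derivative_transform[OF v eqI d1] unfolding val .
qed

lemma Iz_cont:
  fixes z :: complex
  assumes fc: "continuous_on {-1..1} f"
  shows "continuous_on {-1..1} (Iz z f)"
  using cont_of_deriv[OF Iz_deriv[OF fc]] .


lemma st_eqI:
  fixes U V :: st
  assumes "p1 U = p1 V" "p2 U = p2 V" "xi1 U = xi1 V" "xi2 U = xi2 V"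
    "P1 U = P1 V" "P2 U = P2 V"
  shows "U = V"
  using assms by (intro st.equality) auto

definition Sol :: "complex \<Rightarrow> complex \<Rightarrow> complex \<Rightarrow> st \<Rightarrow> st" where
  "Sol z q1 q2 F = \<lparr> p1 = q1, p2 = q2, xi1 = z * q1 - p1 F, xi2 = z * q2 - p2 F,
     P1 = (\<lambda>v. if v \<in> {-1..1} then exp (z * of_real v) * q1 + Iz z (P1 F) v else 0),
     P2 = (\<lambda>v. if v \<in> {-1..1} then exp (z * of_real v) * q2 + Iz z (P2 F) v else 0) \<rparr>"

definition bA :: "real \<Rightarrow> real \<Rightarrow> complex \<Rightarrow> st \<Rightarrow> complex" where
  "bA \<kappa> c z F = (of_real c)\<^sup>2 * xi1 F + (of_real c)\<^sup>2 * z * p1 F + Iz z (P2 F) 1 + of_real \<kappa> * Iz z (P2 F) (-1)"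

definition bB :: "real \<Rightarrow> real \<Rightarrow> real \<Rightarrow> complex \<Rightarrow> st \<Rightarrow> complex" where
  "bB \<kappa> w c z F = (of_real c)\<^sup>2 * xi2 F + (of_real c)\<^sup>2 * z * p2 F
     + of_real \<kappa> * of_real w * Iz z (P1 F) 1 + of_real w * Iz z (P1 F) (-1)"

lemma solP_deriv:
  fixes z :: complex
  assumes fc: "continuous_on {-1..1} f" and v: "v \<in> {-1..1}"
  shows "((\<lambda>v. if v \<in> {-1..1} then exp (z * of_real v) * q + Iz z f v else 0) has_vector_derivative
     (z * (exp (z * of_real v) * q + Iz z f v) - f v)) (at v within {-1..1})"
proof -
  have d: "((\<lambda>v. exp (z * of_real v) * q + Iz z f v) has_vector_derivative
     (z * exp (z * of_real v) * q + (z * Iz z f v - f v))) (at v within {-1..1})"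
    using has_vector_derivative_add[OF has_vector_derivative_mult[OF exp_real_deriv has_vector_derivative_const[of q]] Iz_deriv[OF fc v]]
    by simp
  have e: "z * exp (z * of_real v) * q + (z * Iz z f v - f v) = z * (exp (z * of_real v) * q + Iz z f v) - f v"
    by (simp add: algebra_simps)
  show ?thesis
    by (rule has_vector_derivative_transform[OF v _ d[unfolded e]]) simp
qed

lemma solP_cont:
  fixes z :: complex
  assumes fc: "continuous_on {-1..1} f"
  shows "continuous_on {-1..1} (\<lambda>v. z * (exp (z * of_real v) * q + Iz z f v) - f v)"
  by (intro continuous_intros Iz_cont fc)

lemma XspD:
  assumes "F \<in> Xsp"
  shows "continuous_on {-1..1} (P1 F)" "continuous_on {-1..1} (P2 F)"
    "P1 F 0 = p1 F" "P2 F 0 = p2 F"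
    "\<And>v. v \<notin> {-1..1} \<Longrightarrow> P1 F v = 0" "\<And>v. v \<notin> {-1..1} \<Longrightarrow> P2 F v = 0"
  using assms unfolding Xsp_def by auto

lemma Sol_Dsp:
  assumes F: "F \<in> Xsp"
  shows "Sol z q1 q2 F \<in> Dsp"
proof -
  note Fd = XspD[OF F]
  have c1: "C1_on (P1 (Sol z q1 q2 F))"
    unfolding Sol_def st.select_convs by (rule C1_onI[OF solP_deriv[OF Fd(1)] solP_cont[OF Fd(1)]])
  have c2: "C1_on (P2 (Sol z q1 q2 F))"
    unfolding Sol_def st.select_convs by (rule C1_onI[OF solP_deriv[OF Fd(2)] solP_cont[OF Fd(2)]])
  show ?thesis
    unfolding Dsp_def Xsp_def using c1 c2 C1_cont[OF c1] C1_cont[OF c2]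
    by (simp add: Sol_def)
qed

lemma Sol_dI:
  assumes F: "F \<in> Xsp" and v: "v \<in> {-1..1}"
  shows "dI (P1 (Sol z q1 q2 F)) v = z * P1 (Sol z q1 q2 F) v - P1 F v"
    "dI (P2 (Sol z q1 q2 F)) v = z * P2 (Sol z q1 q2 F) v - P2 F v"
proof -
  note Fd = XspD[OF F]
  show "dI (P1 (Sol z q1 q2 F)) v = z * P1 (Sol z q1 q2 F) v - P1 F v"
    using dI_eq[OF v solP_deriv[OF Fd(1) v]] v by (simp add: Sol_def)
  show "dI (P2 (Sol z q1 q2 F)) v = z * P2 (Sol z q1 q2 F) v - P2 F v"
    using dI_eq[OF v solP_deriv[OF Fd(2) v]] v by (simp add: Sol_def)
qed

lemma Sol_zmL:
  assumes F: "F \<in> Xsp" and c: "c \<noteq> 0"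
    and hA: "m11 \<kappa> w c z * q1 + m12 \<kappa> w c z * q2 = bA \<kappa> c z F"
    and hB: "m21 \<kappa> w c z * q1 + m22 \<kappa> w c z * q2 = bB \<kappa> w c z F"
  shows "zmL z \<kappa> w c (Sol z q1 q2 F) = F"
proof (rule st_eqI)
  note Fd = XspD[OF F]
  have c2: "(of_real c :: complex)\<^sup>2 \<noteq> 0" using c by simp
  show "p1 (zmL z \<kappa> w c (Sol z q1 q2 F)) = p1 F" by (simp add: zmL_simps Sol_def)
  show "p2 (zmL z \<kappa> w c (Sol z q1 q2 F)) = p2 F" by (simp add: zmL_simps Sol_def)
  show "xi1 (zmL z \<kappa> w c (Sol z q1 q2 F)) = xi1 F"
    using hA c2 unfolding zmL_simps
    by (simp add: Sol_def m11_def m12_def bA_def field_simps) (simp add: power2_eq_square algebra_simps)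
  show "xi2 (zmL z \<kappa> w c (Sol z q1 q2 F)) = xi2 F"
    using hB c2 unfolding zmL_simps
    by (simp add: Sol_def m21_def m22_def bB_def field_simps) (simp add: power2_eq_square algebra_simps)
  show "P1 (zmL z \<kappa> w c (Sol z q1 q2 F)) = P1 F"
  proof
    fix v show "P1 (zmL z \<kappa> w c (Sol z q1 q2 F)) v = P1 F v"
      using Sol_dI(1)[OF F, of v z q1 q2] Fd(5)[of v]
      by (cases "v \<in> {-1..1}") (auto simp: zmL_simps Sol_def dI_def)
  qed
  show "P2 (zmL z \<kappa> w c (Sol z q1 q2 F)) = P2 F"
  proof
    fix v show "P2 (zmL z \<kappa> w c (Sol z q1 q2 F)) v = P2 F v"
      using Sol_dI(2)[OF F, of v z q1 q2] Fd(6)[of v]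
      by (cases "v \<in> {-1..1}") (auto simp: zmL_simps Sol_def dI_def)
  qed
qed

lemma DspD:
  assumes "U \<in> Dsp"
  shows "U \<in> Xsp" "C1_on (P1 U)" "C1_on (P2 U)"
  using assms unfolding Dsp_def by auto

lemma charA:
  fixes z :: complex and \<kappa> w c :: real
  assumes U: "U \<in> Dsp" and c: "c \<noteq> 0"
  defines "F \<equiv> zmL z \<kappa> w c U"
  shows "U = Sol z (p1 U) (p2 U) F"
    "m11 \<kappa> w c z * p1 U + m12 \<kappa> w c z * p2 U = bA \<kappa> c z F"
    "m21 \<kappa> w c z * p1 U + m22 \<kappa> w c z * p2 U = bB \<kappa> w c z F"
proof -
  note Ud = DspD[OF U] note Ux = XspD[OF Ud(1)]
  have P1F: "P1 F = (\<lambda>v. z * P1 U v - dI (P1 U) v)" unfolding F_def zmL_simps ..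
  have P2F: "P2 F = (\<lambda>v. z * P2 U v - dI (P2 U) v)" unfolding F_def zmL_simps ..
  have fc1: "continuous_on {-1..1} (P1 F)" unfolding P1F
    by (intro continuous_intros C1_cont C1_dI_cont Ud)
  have fc2: "continuous_on {-1..1} (P2 F)" unfolding P2F
    by (intro continuous_intros C1_cont C1_dI_cont Ud)
  have f1: "P1 U v = exp (z * of_real v) * p1 U + Iz z (P1 F) v" if v: "v \<in> {-1..1}" for v
    using ode_sol[OF C1_deriv[OF Ud(2)] fc1 _ v] Ux(3) by (simp add: P1F)
  have f2: "P2 U v = exp (z * of_real v) * p2 U + Iz z (P2 F) v" if v: "v \<in> {-1..1}" for v
    using ode_sol[OF C1_deriv[OF Ud(3)] fc2 _ v] Ux(4) by (simp add: P2F)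
  show "U = Sol z (p1 U) (p2 U) F"
  proof (rule st_eqI)
    show "P1 U = P1 (Sol z (p1 U) (p2 U) F)"
    proof
      fix v show "P1 U v = P1 (Sol z (p1 U) (p2 U) F) v"
        using f1[of v] Ux(5)[of v] by (cases "v \<in> {-1..1}") (auto simp: Sol_def)
    qed
    show "P2 U = P2 (Sol z (p1 U) (p2 U) F)"
    proof
      fix v show "P2 U v = P2 (Sol z (p1 U) (p2 U) F) v"
        using f2[of v] Ux(6)[of v] by (cases "v \<in> {-1..1}") (auto simp: Sol_def)
    qed
  qed (simp_all add: Sol_def F_def zmL_simps)
  have c2: "(of_real c :: complex)\<^sup>2 \<noteq> 0" using c by simp
  have xF: "p1 F = z * p1 U - xi1 U" "p2 F = z * p2 U - xi2 U"
    "xi1 F = z * xi1 U - (- (1 + of_real \<kappa>) * p1 U + P2 U 1 + of_real \<kappa> * P2 U (-1)) / (of_real c)\<^sup>2"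
    "xi2 F = z * xi2 U - (- of_real w * (1 + of_real \<kappa>) * p2 U
            + of_real w * (of_real \<kappa> * P1 U 1 + P1 U (-1))) / (of_real c)\<^sup>2"
    unfolding F_def zmL_simps by simp_all
  have e1: "P2 U 1 = exp z * p2 U + Iz z (P2 F) 1" using f2[of 1] by simp
  have e2: "P2 U (-1) = exp (-z) * p2 U + Iz z (P2 F) (-1)" using f2[of "-1"] by simp
  have e3: "P1 U 1 = exp z * p1 U + Iz z (P1 F) 1" using f1[of 1] by simp
  have e4: "P1 U (-1) = exp (-z) * p1 U + Iz z (P1 F) (-1)" using f1[of "-1"] by simp
  show "m11 \<kappa> w c z * p1 U + m12 \<kappa> w c z * p2 U = bA \<kappa> c z F"
    unfolding bA_def xF(1,3) using c2 e1 e2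
    by (simp add: m11_def m12_def field_simps) (simp add: power2_eq_square algebra_simps)
  show "m21 \<kappa> w c z * p1 U + m22 \<kappa> w c z * p2 U = bB \<kappa> w c z F"
    unfolding bB_def xF(2,4) using c2 e3 e4
    by (simp add: m21_def m22_def field_simps) (simp add: power2_eq_square algebra_simps)
qed


lemma sup_bound:
  assumes "continuous_on {-1..1} P" "v \<in> {-1..1}"
  shows "norm (P v) \<le> Sup ((\<lambda>v. norm (P v)) ` {-1..1::real})"
proof -
  have "continuous_on {-1..1} (\<lambda>v. norm (P v))" by (intro continuous_intros assms)
  then have "compact ((\<lambda>v. norm (P v)) ` {-1..1::real})"
    by (intro compact_continuous_image) auto
  then have "bdd_above ((\<lambda>v. norm (P v)) ` {-1..1::real})"
    by (intro bounded_imp_bdd_above compact_imp_bounded)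
  then show ?thesis by (intro cSUP_upper assms(2))
qed

lemma normX_ge:
  assumes "F \<in> Xsp"
  shows "norm (p1 F) \<le> normX F" "norm (p2 F) \<le> normX F" "norm (xi1 F) \<le> normX F" "norm (xi2 F) \<le> normX F"
    "\<And>v. v \<in> {-1..1} \<Longrightarrow> norm (P1 F v) \<le> normX F"
    "\<And>v. v \<in> {-1..1} \<Longrightarrow> norm (P2 F v) \<le> normX F"
proof -
  note Fd = XspD[OF assms]
  show "norm (p1 F) \<le> normX F" "norm (p2 F) \<le> normX F" "norm (xi1 F) \<le> normX F" "norm (xi2 F) \<le> normX F"
    unfolding normX_def by (auto intro: Max_ge)
  fix v :: real assume v: "v \<in> {-1..1}"
  show "norm (P1 F v) \<le> normX F"
    using sup_bound[OF Fd(1) v] unfolding normX_def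
    by (rule order_trans) (auto intro: Max_ge)
  show "norm (P2 F v) \<le> normX F"
    using sup_bound[OF Fd(2) v] unfolding normX_def
    by (rule order_trans) (auto intro: Max_ge)
qed

lemma normX_le:
  assumes "norm (p1 U) \<le> C" "norm (p2 U) \<le> C" "norm (xi1 U) \<le> C" "norm (xi2 U) \<le> C"
    "\<And>v. v \<in> {-1..1} \<Longrightarrow> norm (P1 U v) \<le> C"
    "\<And>v. v \<in> {-1..1} \<Longrightarrow> norm (P2 U v) \<le> C"
  shows "normX U \<le> C"
proof -
  have "Sup ((\<lambda>v. norm (P1 U v)) ` {-1..1::real}) \<le> C"
    by (rule cSUP_least) (auto intro: assms(5))
  moreover have "Sup ((\<lambda>v. norm (P2 U v)) ` {-1..1::real}) \<le> C"
    by (rule cSUP_least) (auto intro: assms(6))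
  ultimately show ?thesis
    unfolding normX_def using assms(1-4) by simp
qed

lemma exp_bound:
  fixes z :: complex
  assumes "\<bar>t\<bar> \<le> 1"
  shows "norm (exp (z * of_real t)) \<le> exp (norm z)"
proof -
  have "Re (z * of_real t) \<le> norm (z * of_real t)" by (rule complex_Re_le_cmod)
  also have "\<dots> = norm z * \<bar>t\<bar>" by (simp add: norm_mult)
  also have "\<dots> \<le> norm z" using assms by (simp add: mult_left_le)
  finally show ?thesis by (simp add: norm_exp)
qed

lemma Iz_bound:
  fixes z :: complex
  assumes fc: "continuous_on {-1..1} f" and B: "\<And>s. s \<in> {-1..1} \<Longrightarrow> norm (f s) \<le> B"
    and v: "v \<in> {-1..1}"
  shows "norm (Iz z f v) \<le> exp (norm z) * B"
proof -
  have B0: "0 \<le> B" using B[of 0] by (auto intro: order_trans[OF norm_ge_zero])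
  have gb: "norm (exp (z * of_real (v - s)) * f s) \<le> exp (norm z) * B"
    if "s \<in> {-1..1}" "\<bar>v - s\<bar> \<le> 1" for s
    unfolding norm_mult
    by (rule mult_mono[OF exp_bound[OF that(2)] B[OF that(1)]]) auto
  have gc: "continuous_on S (\<lambda>s. exp (z * of_real (v - s)) * f s)" if "S \<subseteq> {-1..1}" for S
    by (intro continuous_intros continuous_on_subset[OF fc that])
  show ?thesis
  proof (cases "0 \<le> v")
    case True
    have "norm (integral {0..v} (\<lambda>s. exp (z * of_real (v - s)) * f s)) \<le> exp (norm z) * B * (v - 0)"
    proof (rule integral_bound)
      show "continuous_on {0..v} (\<lambda>s. exp (z * of_real (v - s)) * f s)" by (rule gc) (use v in auto)
      fix t assume "t \<in> {0..v}" then show "norm (exp (z * of_real (v - t)) * f t) \<le> exp (norm z) * B"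
        using v by (intro gb) auto
    qed (use True in auto)
    also have "\<dots> \<le> exp (norm z) * B" using v B0 by (simp add: mult_left_le)
    finally show ?thesis using True unfolding Iz_def by simp
  next
    case False
    have "norm (integral {v..0} (\<lambda>s. exp (z * of_real (v - s)) * f s)) \<le> exp (norm z) * B * (0 - v)"
    proof (rule integral_bound)
      show "continuous_on {v..0} (\<lambda>s. exp (z * of_real (v - s)) * f s)" by (rule gc) (use v in auto)
      fix t assume "t \<in> {v..0}" then show "norm (exp (z * of_real (v - t)) * f t) \<le> exp (norm z) * B"
        using v by (intro gb) auto
    qed (use False in auto)
    also have "\<dots> \<le> exp (norm z) * B" using v B0 mult_left_le[of "-v" "exp (norm z) * B"] by simp
    finally show ?thesis using False unfolding Iz_def by simp
  qed
qed


lemma dI_zero[simp]: "dI (\<lambda>_. 0) v = 0"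
proof (cases "v \<in> {-1..1}")
  case True
  show ?thesis by (rule dI_eq[OF True has_vector_derivative_const])
next
  case False
  then show ?thesis unfolding dI_def by (simp only: if_False)
qed

lemma C1_zero: "C1_on (\<lambda>_. 0)"
  by (rule C1_onI[where D="\<lambda>_. 0"]) (auto intro: has_vector_derivative_const)

lemma stzero_Xsp: "stzero \<in> Xsp"
  unfolding Xsp_def stzero_def by simp

lemma stzero_Dsp: "stzero \<in> Dsp"
  unfolding Dsp_def using stzero_Xsp C1_zero by (simp add: stzero_def)

lemma zmL_stzero: "zmL z \<kappa> w c stzero = stzero"
  by (rule st_eqI) (simp_all add: zmL_simps stzero_def)

definition q1sol :: "real \<Rightarrow> real \<Rightarrow> real \<Rightarrow> complex \<Rightarrow> st \<Rightarrow> complex" where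
  "q1sol \<kappa> w c z F = (m22 \<kappa> w c z * bA \<kappa> c z F - m12 \<kappa> w c z * bB \<kappa> w c z F) / detM \<kappa> w c z"
definition q2sol :: "real \<Rightarrow> real \<Rightarrow> real \<Rightarrow> complex \<Rightarrow> st \<Rightarrow> complex" where
  "q2sol \<kappa> w c z F = (m11 \<kappa> w c z * bB \<kappa> w c z F - m21 \<kappa> w c z * bA \<kappa> c z F) / detM \<kappa> w c z"

lemma solve2:
  fixes a b c d A B :: complex
  assumes D: "a * d - b * c \<noteq> 0"
  shows "a * ((d * A - b * B) / (a * d - b * c)) + b * ((a * B - c * A) / (a * d - b * c)) = A"
    "c * ((d * A - b * B) / (a * d - b * c)) + d * ((a * B - c * A) / (a * d - b * c)) = B"
proof -
  have e1: "a * (d * A - b * B) + b * (a * B - c * A) = A * (a * d - b * c)" by algebra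
  have e2: "c * (d * A - b * B) + d * (a * B - c * A) = B * (a * d - b * c)" by algebra
  show "a * ((d * A - b * B) / (a * d - b * c)) + b * ((a * B - c * A) / (a * d - b * c)) = A"
    by (simp only: times_divide_eq_right add_divide_distrib[symmetric] e1) (use D in simp)
  show "c * ((d * A - b * B) / (a * d - b * c)) + d * ((a * B - c * A) / (a * d - b * c)) = B"
    by (simp only: times_divide_eq_right add_divide_distrib[symmetric] e2) (use D in simp)
qed

lemma solve2_unique:
  fixes a b c d A B x y :: complex
  assumes D: "a * d - b * c \<noteq> 0" and h: "a * x + b * y = A" "c * x + d * y = B"
  shows "x = (d * A - b * B) / (a * d - b * c)" "y = (a * B - c * A) / (a * d - b * c)"
proof -
  have e1: "d * A - b * B = x * (a * d - b * c)" unfolding h[symmetric] by algebra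
  have e2: "a * B - c * A = y * (a * d - b * c)" unfolding h[symmetric] by algebra
  show "x = (d * A - b * B) / (a * d - b * c)" unfolding e1 using D by simp
  show "y = (a * B - c * A) / (a * d - b * c)" unfolding e2 using D by simp
qed

lemma q_solves:
  assumes "detM \<kappa> w c z \<noteq> 0"
  shows "m11 \<kappa> w c z * q1sol \<kappa> w c z F + m12 \<kappa> w c z * q2sol \<kappa> w c z F = bA \<kappa> c z F"
    "m21 \<kappa> w c z * q1sol \<kappa> w c z F + m22 \<kappa> w c z * q2sol \<kappa> w c z F = bB \<kappa> w c z F"
  using solve2[OF assms[unfolded detM_eq]] unfolding q1sol_def q2sol_def detM_eq .

lemma q_unique:
  assumes "detM \<kappa> w c z \<noteq> 0"
    "m11 \<kappa> w c z * x1 + m12 \<kappa> w c z * x2 = bA \<kappa> c z F"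
    "m21 \<kappa> w c z * x1 + m22 \<kappa> w c z * x2 = bB \<kappa> w c z F"
  shows "x1 = q1sol \<kappa> w c z F" "x2 = q2sol \<kappa> w c z F"
  using solve2_unique[OF assms[unfolded detM_eq]] unfolding q1sol_def q2sol_def detM_eq .

lemma norm4: "norm (a + b + c + d) \<le> norm a + norm b + norm c + norm (d::'a::real_normed_vector)"
  using norm_triangle_ineq[of "a+b+c" d] norm_triangle_ineq[of "a+b" c] norm_triangle_ineq[of a b] by linarith

lemma norm_mult_le: "norm (x::'a::real_normed_algebra) \<le> N \<Longrightarrow> norm (a * x) \<le> norm a * N"
  by (rule order_trans[OF norm_mult_ineq]) (simp add: mult_left_mono)

definition Kb :: "real \<Rightarrow> real \<Rightarrow> real \<Rightarrow> complex \<Rightarrow> real" where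
  "Kb \<kappa> w c z = c\<^sup>2 + c\<^sup>2 * norm z + exp (norm z) * (1 + \<bar>\<kappa>\<bar> + \<bar>\<kappa>\<bar> * \<bar>w\<bar> + \<bar>w\<bar>)"

lemma bA_bound:
  assumes F: "F \<in> Xsp"
  shows "norm (bA \<kappa> c z F) \<le> Kb \<kappa> w c z * normX F"
proof -
  define N where "N = normX F"
  define E where "E = exp (norm z)"
  note g = normX_ge[OF F, folded N_def]
  note Fd = XspD[OF F]
  have N0: "0 \<le> N" using g(1) by (rule order_trans[OF norm_ge_zero])
  have I1: "norm (Iz z (P2 F) 1) \<le> E * N" unfolding E_def by (rule Iz_bound[OF Fd(2) g(6)]) auto
  have I2: "norm (Iz z (P2 F) (-1)) \<le> E * N" unfolding E_def by (rule Iz_bound[OF Fd(2) g(6)]) auto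
  have t1: "norm ((of_real c)\<^sup>2 * xi1 F) \<le> c\<^sup>2 * N" using norm_mult_le[OF g(3), of "(of_real c)\<^sup>2"] by (simp add: norm_power)
  have t2: "norm ((of_real c)\<^sup>2 * z * p1 F) \<le> c\<^sup>2 * norm z * N"
    using norm_mult_le[OF g(1), of "(of_real c)\<^sup>2 * z"] by (simp add: norm_power norm_mult)
  have t4: "norm (of_real \<kappa> * Iz z (P2 F) (-1)) \<le> \<bar>\<kappa>\<bar> * (E * N)"
    using norm_mult_le[OF I2, of "of_real \<kappa>"] by simp
  have "norm (bA \<kappa> c z F) \<le> c\<^sup>2 * N + c\<^sup>2 * norm z * N + E * N + \<bar>\<kappa>\<bar> * (E * N)"
    unfolding bA_def using norm4 t1 t2 I1 t4 by (smt (verit))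
  also have "\<dots> \<le> Kb \<kappa> w c z * N"
  proof -
    have "0 \<le> E * (\<bar>\<kappa>\<bar> * \<bar>w\<bar> + \<bar>w\<bar>) * N" unfolding E_def using N0 by simp
    then show ?thesis unfolding Kb_def E_def[symmetric] by (simp add: algebra_simps)
  qed
  finally show ?thesis unfolding N_def .
qed

lemma bB_bound:
  assumes F: "F \<in> Xsp"
  shows "norm (bB \<kappa> w c z F) \<le> Kb \<kappa> w c z * normX F"
proof -
  define N where "N = normX F"
  define E where "E = exp (norm z)"
  note g = normX_ge[OF F, folded N_def]
  note Fd = XspD[OF F]
  have N0: "0 \<le> N" using g(1) by (rule order_trans[OF norm_ge_zero])
  have I1: "norm (Iz z (P1 F) 1) \<le> E * N" unfolding E_def by (rule Iz_bound[OF Fd(1) g(5)]) auto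
  have I2: "norm (Iz z (P1 F) (-1)) \<le> E * N" unfolding E_def by (rule Iz_bound[OF Fd(1) g(5)]) auto
  have t1: "norm ((of_real c)\<^sup>2 * xi2 F) \<le> c\<^sup>2 * N" using norm_mult_le[OF g(4), of "(of_real c)\<^sup>2"] by (simp add: norm_power)
  have t2: "norm ((of_real c)\<^sup>2 * z * p2 F) \<le> c\<^sup>2 * norm z * N"
    using norm_mult_le[OF g(2), of "(of_real c)\<^sup>2 * z"] by (simp add: norm_power norm_mult)
  have t3: "norm (of_real \<kappa> * of_real w * Iz z (P1 F) 1) \<le> \<bar>\<kappa>\<bar> * \<bar>w\<bar> * (E * N)"
    using norm_mult_le[OF I1, of "of_real \<kappa> * of_real w"] by (simp add: norm_mult)
  have t4: "norm (of_real w * Iz z (P1 F) (-1)) \<le> \<bar>w\<bar> * (E * N)"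
    using norm_mult_le[OF I2, of "of_real w"] by simp
  have "norm (bB \<kappa> w c z F) \<le> c\<^sup>2 * N + c\<^sup>2 * norm z * N + \<bar>\<kappa>\<bar> * \<bar>w\<bar> * (E * N) + \<bar>w\<bar> * (E * N)"
    unfolding bB_def using norm4 t1 t2 t3 t4 by (smt (verit))
  also have "\<dots> \<le> Kb \<kappa> w c z * N"
  proof -
    have "0 \<le> E * (1 + \<bar>\<kappa>\<bar>) * N" unfolding E_def using N0 by simp
    then show ?thesis unfolding Kb_def E_def[symmetric] by (simp add: algebra_simps)
  qed
  finally show ?thesis unfolding N_def .
qed

definition Qb :: "real \<Rightarrow> real \<Rightarrow> real \<Rightarrow> complex \<Rightarrow> real" where
  "Qb \<kappa> w c z = (norm (m11 \<kappa> w c z) + norm (m12 \<kappa> w c z) + norm (m21 \<kappa> w c z) + norm (m22 \<kappa> w c z))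
      * Kb \<kappa> w c z / norm (detM \<kappa> w c z)"

definition Cb :: "real \<Rightarrow> real \<Rightarrow> real \<Rightarrow> complex \<Rightarrow> real" where
  "Cb \<kappa> w c z = (1 + norm z + exp (norm z)) * (Qb \<kappa> w c z + 1)"

lemma q_bound:
  assumes F: "F \<in> Xsp"
  shows "norm (q1sol \<kappa> w c z F) \<le> Qb \<kappa> w c z * normX F"
    "norm (q2sol \<kappa> w c z F) \<le> Qb \<kappa> w c z * normX F"
proof -
  define N where "N = Kb \<kappa> w c z * normX F"
  have a: "norm (bA \<kappa> c z F) \<le> N" unfolding N_def by (rule bA_bound[OF F])
  have b: "norm (bB \<kappa> w c z F) \<le> N" unfolding N_def by (rule bB_bound[OF F])
  define n11 where "n11 = norm (m11 \<kappa> w c z)"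
  define n12 where "n12 = norm (m12 \<kappa> w c z)"
  define n21 where "n21 = norm (m21 \<kappa> w c z)"
  define n22 where "n22 = norm (m22 \<kappa> w c z)"
  have N0: "0 \<le> N" using a by (rule order_trans[OF norm_ge_zero])
  have h1: "norm (m22 \<kappa> w c z * bA \<kappa> c z F - m12 \<kappa> w c z * bB \<kappa> w c z F) \<le> (n11 + n12 + n21 + n22) * N"
  proof -
    have "norm (m22 \<kappa> w c z * bA \<kappa> c z F - m12 \<kappa> w c z * bB \<kappa> w c z F)
       \<le> norm (m22 \<kappa> w c z * bA \<kappa> c z F) + norm (m12 \<kappa> w c z * bB \<kappa> w c z F)" by (rule norm_triangle_ineq4)
    also have "\<dots> \<le> n22 * N + n12 * N" unfolding n22_def n12_def
      by (intro add_mono norm_mult_le a b)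
    also have "\<dots> \<le> (n11 + n12 + n21 + n22) * N"
      using N0 by (simp add: algebra_simps n11_def n21_def)
    finally show ?thesis .
  qed
  have h2: "norm (m11 \<kappa> w c z * bB \<kappa> w c z F - m21 \<kappa> w c z * bA \<kappa> c z F) \<le> (n11 + n12 + n21 + n22) * N"
  proof -
    have "norm (m11 \<kappa> w c z * bB \<kappa> w c z F - m21 \<kappa> w c z * bA \<kappa> c z F)
       \<le> norm (m11 \<kappa> w c z * bB \<kappa> w c z F) + norm (m21 \<kappa> w c z * bA \<kappa> c z F)" by (rule norm_triangle_ineq4)
    also have "\<dots> \<le> n11 * N + n21 * N" unfolding n11_def n21_def
      by (intro add_mono norm_mult_le a b)
    also have "\<dots> \<le> (n11 + n12 + n21 + n22) * N"
      using N0 by (simp add: algebra_simps n12_def n22_def)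
    finally show ?thesis .
  qed
  have Q: "Qb \<kappa> w c z * normX F = (n11 + n12 + n21 + n22) * N / norm (detM \<kappa> w c z)"
    unfolding Qb_def N_def n11_def n12_def n21_def n22_def by simp
  show "norm (q1sol \<kappa> w c z F) \<le> Qb \<kappa> w c z * normX F"
    unfolding Q q1sol_def norm_divide by (rule divide_right_mono[OF h1]) simp
  show "norm (q2sol \<kappa> w c z F) \<le> Qb \<kappa> w c z * normX F"
    unfolding Q q2sol_def norm_divide by (rule divide_right_mono[OF h2]) simp
qed

lemma Sol_bound:
  assumes F: "F \<in> Xsp"
  shows "normX (Sol z (q1sol \<kappa> w c z F) (q2sol \<kappa> w c z F) F) \<le> Cb \<kappa> w c z * normX F"
proof -
  define N where "N = normX F"
  define E where "E = exp (norm z)"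
  define Q where "Q = Qb \<kappa> w c z"
  note g = normX_ge[OF F, folded N_def]
  note Fd = XspD[OF F]
  note qb = q_bound[OF F, of \<kappa> w c z, folded N_def Q_def]
  have N0: "0 \<le> N" using g(1) by (rule order_trans[OF norm_ge_zero])
  have Q0: "0 \<le> Q * N" using qb(1) by (rule order_trans[OF norm_ge_zero])
  have E0: "0 \<le> E" unfolding E_def by simp
  have CN: "Cb \<kappa> w c z * N = Q * N + N + norm z * (Q * N) + norm z * N + E * (Q * N) + E * N"
    unfolding Cb_def Q_def[symmetric] E_def[symmetric] by (simp add: algebra_simps)
  have nz: "0 \<le> norm z * (Q * N)" "0 \<le> norm z * N" "0 \<le> E * (Q * N)" "0 \<le> E * N"
    using Q0 N0 E0 by simp_all
  have pb: "norm (exp (z * of_real v) * q + Iz z f v) \<le> E * (Q * N) + E * N"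
    if "norm q \<le> Q * N" "v \<in> {-1..1}" "continuous_on {-1..1} f" "\<And>s. s \<in> {-1..1} \<Longrightarrow> norm (f s) \<le> N" for q f v
  proof -
    have "norm (exp (z * of_real v) * q) \<le> E * (Q * N)"
      unfolding E_def norm_mult using that(2) E0
      by (intro mult_mono exp_bound that(1)) auto
    moreover have "norm (Iz z f v) \<le> E * N" unfolding E_def by (rule Iz_bound[OF that(3,4,2)])
    ultimately show ?thesis by (smt (verit) norm_triangle_ineq)
  qed
  have xb: "norm (z * q - p) \<le> norm z * (Q * N) + N" if "norm q \<le> Q * N" "norm p \<le> N" for q p
  proof -
    have "norm (z * q) \<le> norm z * (Q * N)" by (rule norm_mult_le[OF that(1)])
    then show ?thesis using that(2) by (smt (verit) norm_triangle_ineq4)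
  qed
  show ?thesis unfolding N_def[symmetric]
  proof (rule normX_le)
    show "norm (p1 (Sol z (q1sol \<kappa> w c z F) (q2sol \<kappa> w c z F) F)) \<le> Cb \<kappa> w c z * N"
      using qb(1) nz N0 unfolding CN Sol_def st.select_convs by linarith
    show "norm (p2 (Sol z (q1sol \<kappa> w c z F) (q2sol \<kappa> w c z F) F)) \<le> Cb \<kappa> w c z * N"
      using qb(2) nz N0 unfolding CN Sol_def st.select_convs by linarith
    show "norm (xi1 (Sol z (q1sol \<kappa> w c z F) (q2sol \<kappa> w c z F) F)) \<le> Cb \<kappa> w c z * N"
      using xb[OF qb(1) g(1)] nz Q0 N0 unfolding CN Sol_def st.select_convs by linarith
    show "norm (xi2 (Sol z (q1sol \<kappa> w c z F) (q2sol \<kappa> w c z F) F)) \<le> Cb \<kappa> w c z * N"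
      using xb[OF qb(2) g(2)] nz Q0 N0 unfolding CN Sol_def st.select_convs by linarith
    fix v :: real assume v: "v \<in> {-1..1}"
    show "norm (P1 (Sol z (q1sol \<kappa> w c z F) (q2sol \<kappa> w c z F) F) v) \<le> Cb \<kappa> w c z * N"
      using pb[OF qb(1) v Fd(1) g(5)] nz Q0 N0 v unfolding CN Sol_def st.select_convs if_P[OF v] by linarith
    show "norm (P2 (Sol z (q1sol \<kappa> w c z F) (q2sol \<kappa> w c z F) F) v) \<le> Cb \<kappa> w c z * N"
      using pb[OF qb(2) v Fd(2) g(6)] nz Q0 N0 v unfolding CN Sol_def st.select_convs if_P[OF v] by linarith
  qed
qed

lemma Sol_eq_unique:
  assumes c: "c \<noteq> 0" and d: "detM \<kappa> w c z \<noteq> 0" and U: "U \<in> Dsp"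
  shows "U = Sol z (q1sol \<kappa> w c z (zmL z \<kappa> w c U)) (q2sol \<kappa> w c z (zmL z \<kappa> w c U)) (zmL z \<kappa> w c U)"
proof -
  note ch = charA[OF U c, where z=z and \<kappa>=\<kappa> and w=w]
  note qu = q_unique[OF d ch(2,3)]
  show ?thesis using ch(1) unfolding qu[symmetric] .
qed

lemma det_ne_resolvent:
  assumes c: "c \<noteq> 0" and d: "detM \<kappa> w c z \<noteq> 0"
  shows "z \<in> resolvent_set \<kappa> w c"
  unfolding resolvent_set_def
proof (intro CollectI conjI ballI)
  fix F assume F: "F \<in> Xsp"
  define S where "S = Sol z (q1sol \<kappa> w c z F) (q2sol \<kappa> w c z F) F"
  have S1: "S \<in> Dsp" unfolding S_def by (rule Sol_Dsp[OF F])
  have S2: "zmL z \<kappa> w c S = F" unfolding S_def by (rule Sol_zmL[OF F c q_solves[OF d]])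
  show "\<exists>!U. U \<in> Dsp \<and> zmL z \<kappa> w c U = F"
  proof (rule ex1I[of _ S])
    show "S \<in> Dsp \<and> zmL z \<kappa> w c S = F" using S1 S2 by simp
    fix U assume "U \<in> Dsp \<and> zmL z \<kappa> w c U = F"
    then show "U = S" unfolding S_def using Sol_eq_unique[OF c d, of U] by simp
  qed
next
  show "\<exists>C. \<forall>U\<in>Dsp. zmL z \<kappa> w c U \<in> Xsp \<longrightarrow> normX U \<le> C * normX (zmL z \<kappa> w c U)"
  proof (intro exI ballI impI)
    fix U assume U: "U \<in> Dsp" and F: "zmL z \<kappa> w c U \<in> Xsp"
    show "normX U \<le> Cb \<kappa> w c z * normX (zmL z \<kappa> w c U)"
      using Sol_bound[OF F, of z \<kappa> w c] Sol_eq_unique[OF c d U] by simp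
  qed
qed

lemma ker2:
  fixes a b c d :: complex
  assumes "a * d - b * c = 0"
  shows "\<exists>x y. (x \<noteq> 0 \<or> y \<noteq> 0) \<and> a * x + b * y = 0 \<and> c * x + d * y = 0"
proof (cases "d \<noteq> 0 \<or> c \<noteq> 0")
  case True
  show ?thesis by (rule exI[of _ d], rule exI[of _ "-c"]) (use True assms in \<open>auto simp: algebra_simps\<close>)
next
  case False
  show ?thesis
  proof (cases "b \<noteq> 0 \<or> a \<noteq> 0")
    case True
    show ?thesis by (rule exI[of _ "-b"], rule exI[of _ "a"]) (use True False in \<open>auto simp: algebra_simps\<close>)
  next
    case False2: False
    show ?thesis by (rule exI[of _ 1], rule exI[of _ 0]) (use False False2 in auto)
  qed
qed

lemma bA_zero[simp]: "bA \<kappa> c z stzero = 0" unfolding bA_def stzero_def by simp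
lemma bB_zero[simp]: "bB \<kappa> w c z stzero = 0" unfolding bB_def stzero_def by simp

lemma det_zero_eigen:
  assumes c: "c \<noteq> 0" and d: "detM \<kappa> w c z = 0"
  shows "\<exists>U\<in>Dsp. U \<noteq> stzero \<and> zmL z \<kappa> w c U = stzero"
proof -
  obtain x y where xy: "x \<noteq> 0 \<or> y \<noteq> 0" "m11 \<kappa> w c z * x + m12 \<kappa> w c z * y = 0"
      "m21 \<kappa> w c z * x + m22 \<kappa> w c z * y = 0"
    using ker2[OF d[unfolded detM_eq]] by blast
  define U where "U = Sol z x y stzero"
  have "U \<in> Dsp" unfolding U_def by (rule Sol_Dsp[OF stzero_Xsp])
  moreover have "zmL z \<kappa> w c U = stzero" unfolding U_def
    by (rule Sol_zmL[OF stzero_Xsp c]) (use xy in simp_all)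
  moreover have "U \<noteq> stzero" using xy(1) unfolding U_def by (auto simp: Sol_def stzero_def)
  ultimately show ?thesis by blast
qed

lemma det_zero_not_resolvent:
  assumes c: "c \<noteq> 0" and d: "detM \<kappa> w c z = 0"
  shows "z \<notin> resolvent_set \<kappa> w c"
proof
  assume "z \<in> resolvent_set \<kappa> w c"
  then have "\<exists>!U. U \<in> Dsp \<and> zmL z \<kappa> w c U = stzero"
    unfolding resolvent_set_def using stzero_Xsp by blast
  moreover obtain U where "U \<in> Dsp" "U \<noteq> stzero" "zmL z \<kappa> w c U = stzero"
    using det_zero_eigen[OF c d] by blast
  ultimately show False using stzero_Dsp zmL_stzero by blast
qed

lemma spectrum_eq:
  assumes c: "c \<noteq> 0"
  shows "spectrum_L \<kappa> w c = {z. detM \<kappa> w c z = 0}"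
  unfolding spectrum_L_def using det_ne_resolvent[OF c] det_zero_not_resolvent[OF c] by blast

lemma resolvent_eq:
  assumes c: "c \<noteq> 0"
  shows "z \<in> resolvent_set \<kappa> w c \<longleftrightarrow> detM \<kappa> w c z \<noteq> 0"
  using det_ne_resolvent[OF c] det_zero_not_resolvent[OF c] by blast

lemma eigen_iff:
  "eigenvalue_L \<kappa> w c z \<longleftrightarrow> (\<exists>U\<in>Dsp. U \<noteq> stzero \<and> zmL z \<kappa> w c U = stzero)"
proof -
  have "Lop \<kappa> w c U = stscale z U \<longleftrightarrow> zmL z \<kappa> w c U = stzero" for U
  proof
    assume "Lop \<kappa> w c U = stscale z U"
    then show "zmL z \<kappa> w c U = stzero"
      unfolding zmL_def by (simp add: stadd_def stscale_def stzero_def)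
  next
    assume h: "zmL z \<kappa> w c U = stzero"
    show "Lop \<kappa> w c U = stscale z U"
    proof (rule st_eqI)
      have h': "p1 (zmL z \<kappa> w c U) = 0" "p2 (zmL z \<kappa> w c U) = 0" "xi1 (zmL z \<kappa> w c U) = 0"
        "xi2 (zmL z \<kappa> w c U) = 0" "\<And>v. P1 (zmL z \<kappa> w c U) v = 0" "\<And>v. P2 (zmL z \<kappa> w c U) v = 0"
        unfolding h by (simp_all add: stzero_def)
      show "p1 (Lop \<kappa> w c U) = p1 (stscale z U)" using h'(1) unfolding zmL_def by (simp add: stadd_def stscale_def)
      show "p2 (Lop \<kappa> w c U) = p2 (stscale z U)" using h'(2) unfolding zmL_def by (simp add: stadd_def stscale_def)
      show "xi1 (Lop \<kappa> w c U) = xi1 (stscale z U)" using h'(3) unfolding zmL_def by (simp add: stadd_def stscale_def)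
      show "xi2 (Lop \<kappa> w c U) = xi2 (stscale z U)" using h'(4) unfolding zmL_def by (simp add: stadd_def stscale_def)
      show "P1 (Lop \<kappa> w c U) = P1 (stscale z U)" using h'(5) unfolding zmL_def by (auto simp: stadd_def stscale_def)
      show "P2 (Lop \<kappa> w c U) = P2 (stscale z U)" using h'(6) unfolding zmL_def by (auto simp: stadd_def stscale_def)
    qed
  qed
  then show ?thesis unfolding eigenvalue_L_def by blast
qed


lemma Mnonzero:
  assumes k: "\<kappa> > 0" and w: "w > 0" and c: "\<bar>c\<bar> > 1"
  shows "\<not> (m11 \<kappa> w c z = 0 \<and> m12 \<kappa> w c z = 0 \<and> m21 \<kappa> w c z = 0 \<and> m22 \<kappa> w c z = 0)"
proof
  assume h: "m11 \<kappa> w c z = 0 \<and> m12 \<kappa> w c z = 0 \<and> m21 \<kappa> w c z = 0 \<and> m22 \<kappa> w c z = 0"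
  have "- exp z = of_real \<kappa> * exp (-z)" using h unfolding m12_def by simp
  then have h12: "exp z = - (of_real \<kappa> * exp (-z))" by (metis minus_minus)
  have h21: "of_real \<kappa> * exp z + exp (-z) = 0" using h w unfolding m21_def by simp
  have "(1 - (of_real \<kappa>)\<^sup>2) * exp (-z) = 0" using h21 unfolding h12 by (simp add: algebra_simps power2_eq_square)
  then have "(of_real \<kappa> :: complex)\<^sup>2 = 1" by simp
  then have "\<kappa>\<^sup>2 = 1" by (metis of_real_eq_1_iff of_real_power)
  then have k1: "\<kappa> = 1" using k by (simp add: power2_eq_1_iff)
  have e: "exp z = - exp (-z)" using h12 unfolding k1 by simp
  have "exp z * exp z = - (exp (-z) * exp z)" using arg_cong[OF e, of "\<lambda>t. t * exp z"] by simp
  also have "exp (-z) * exp z = 1" by (simp add: exp_minus)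
  finally have "exp z * exp z = -1" by simp
  moreover have f: "4 * z = (z + z) + (z + z)" by simp
  moreover have "exp (4*z) = (exp z * exp z) * (exp z * exp z)" unfolding f by (simp only: exp_add)
  ultimately have "exp (4 * z) = 1" by simp
  then obtain n :: int where re: "Re z = 0" and im: "Im (4 * z) = of_int (2 * n) * pi"
    unfolding exp_eq_1 by auto
  define y where "y = Im z"
  have y: "4 * y = 2 * of_int n * pi" using im unfolding y_def by simp
  have "Re (m11 \<kappa> w c z) = 0" using h by simp
  then have cy: "c\<^sup>2 * y\<^sup>2 = 2" using re k1 unfolding m11_def y_def by (simp add: power2_eq_square)
  have c2: "c\<^sup>2 > 1" using c by (metis abs_ge_zero one_less_power abs_power2 pos2 power2_abs)
  have y2: "y\<^sup>2 < 2"
  proof -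
    have "y\<^sup>2 * 1 < y\<^sup>2 * c\<^sup>2 \<or> y = 0" using c2 by (cases "y = 0") (auto simp: mult_strict_left_mono)
    then show ?thesis using cy by (auto simp: algebra_simps)
  qed
  show False
  proof (cases "n = 0")
    case True
    then have "y = 0" using y by simp
    then show False using cy by simp
  next
    case False
    then have "\<bar>of_int n :: real\<bar> \<ge> 1" by linarith
    moreover have "2 * \<bar>y\<bar> = pi * \<bar>of_int n\<bar>"
    proof -
      have "2 * y = pi * of_int n" using y by simp
      then have "\<bar>2 * y\<bar> = \<bar>pi * of_int n\<bar>" by simp
      then show ?thesis by (simp add: abs_mult)
    qed
    moreover have "pi * 1 \<le> pi * \<bar>of_int n :: real\<bar>"
      by (rule mult_left_mono) (use \<open>\<bar>of_int n :: real\<bar> \<ge> 1\<close> in auto)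
    ultimately have "\<bar>y\<bar> \<ge> pi / 2" by linarith
    then have "(pi/2)\<^sup>2 \<le> \<bar>y\<bar>\<^sup>2" by (rule power_mono) simp
    then have "y\<^sup>2 \<ge> (pi/2)\<^sup>2" by simp
    moreover have "(pi/2)\<^sup>2 > 2"
    proof -
      have "3 * 3 < pi * pi" using pi_gt3 by (intro mult_strict_mono) auto
      then show ?thesis by (simp add: power2_eq_square)
    qed
    ultimately show False using y2 by simp
  qed
qed

lemma line_ker:
  fixes p q x y :: complex
  assumes "p \<noteq> 0 \<or> q \<noteq> 0" "p * x + q * y = 0"
  shows "\<exists>t. x = t * q \<and> y = - (t * p)"
proof (cases "q = 0")
  case True
  then have p: "p \<noteq> 0" using assms(1) by simp
  have "x = 0" using assms(2) True p by simp
  then show ?thesis using True p by (intro exI[of _ "- y / p"]) simp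
next
  case False
  have "y = - (x / q * p)" using assms(2) False by (simp add: field_simps eq_neg_iff_add_eq_0)
  then show ?thesis using False by (intro exI[of _ "x / q"]) simp
qed

definition adj1 :: "real \<Rightarrow> real \<Rightarrow> real \<Rightarrow> complex \<Rightarrow> complex \<Rightarrow> complex \<Rightarrow> complex" where
  "adj1 \<kappa> w c e1 e2 z = m22 \<kappa> w c z * e1 - m12 \<kappa> w c z * e2"
definition adj2 :: "real \<Rightarrow> real \<Rightarrow> real \<Rightarrow> complex \<Rightarrow> complex \<Rightarrow> complex \<Rightarrow> complex" where
  "adj2 \<kappa> w c e1 e2 z = - m21 \<kappa> w c z * e1 + m11 \<kappa> w c z * e2"

lemma adj_M:
  "m11 \<kappa> w c z * adj1 \<kappa> w c e1 e2 z + m12 \<kappa> w c z * adj2 \<kappa> w c e1 e2 z = detM \<kappa> w c z * e1"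
  "m21 \<kappa> w c z * adj1 \<kappa> w c e1 e2 z + m22 \<kappa> w c z * adj2 \<kappa> w c e1 e2 z = detM \<kappa> w c z * e2"
  unfolding adj1_def adj2_def detM_eq by algebra+

lemma adj_choice:
  assumes k: "\<kappa> > 0" and w: "w > 0" and c: "\<bar>c\<bar> > 1"
  shows "\<exists>e1 e2. (adj1 \<kappa> w c e1 e2 z \<noteq> 0 \<or> adj2 \<kappa> w c e1 e2 z \<noteq> 0) \<and>
     (\<forall>x y. m11 \<kappa> w c z * x + m12 \<kappa> w c z * y = 0 \<and> m21 \<kappa> w c z * x + m22 \<kappa> w c z * y = 0 \<longrightarrow>
        (\<exists>t. x = t * adj1 \<kappa> w c e1 e2 z \<and> y = t * adj2 \<kappa> w c e1 e2 z))"
proof (cases "m21 \<kappa> w c z \<noteq> 0 \<or> m22 \<kappa> w c z \<noteq> 0")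
  case True
  show ?thesis
  proof (rule exI[where x="1::complex"], rule exI[where x="0::complex"], intro conjI allI impI)
    show "adj1 \<kappa> w c 1 0 z \<noteq> 0 \<or> adj2 \<kappa> w c 1 0 z \<noteq> 0" using True by (auto simp: adj1_def adj2_def)
    fix x y assume "m11 \<kappa> w c z * x + m12 \<kappa> w c z * y = 0 \<and> m21 \<kappa> w c z * x + m22 \<kappa> w c z * y = 0"
    then obtain t where "x = t * m22 \<kappa> w c z" "y = - (t * m21 \<kappa> w c z)"
      using line_ker[OF True] by blast
    then show "\<exists>t. x = t * adj1 \<kappa> w c 1 0 z \<and> y = t * adj2 \<kappa> w c 1 0 z"
      by (intro exI[of _ t]) (simp add: adj1_def adj2_def)
  qed
next
  case False
  then have F: "m21 \<kappa> w c z = 0" "m22 \<kappa> w c z = 0" by auto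
  then have T: "m11 \<kappa> w c z \<noteq> 0 \<or> m12 \<kappa> w c z \<noteq> 0" using Mnonzero[OF k w c, of z] by auto
  show ?thesis
  proof (rule exI[where x="0::complex"], rule exI[where x="1::complex"], intro conjI allI impI)
    show "adj1 \<kappa> w c 0 1 z \<noteq> 0 \<or> adj2 \<kappa> w c 0 1 z \<noteq> 0" using T by (auto simp: adj1_def adj2_def)
    fix x y assume "m11 \<kappa> w c z * x + m12 \<kappa> w c z * y = 0 \<and> m21 \<kappa> w c z * x + m22 \<kappa> w c z * y = 0"
    then obtain t where "x = t * m12 \<kappa> w c z" "y = - (t * m11 \<kappa> w c z)"
      using line_ker[OF T] by blast
    then show "\<exists>t. x = t * adj1 \<kappa> w c 0 1 z \<and> y = t * adj2 \<kappa> w c 0 1 z"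
      by (intro exI[of _ "-t"]) (simp add: adj1_def adj2_def)
  qed
qed

lemma lincomb_1: "lincomb a b 1 = stadd (stscale (a 0) (b 0)) stzero"
  unfolding lincomb_def by simp

lemma Sol_zero_scale: "Sol z (t * x) (t * y) stzero = stadd (stscale t (Sol z x y stzero)) stzero"
  by (rule st_eqI) (auto simp: Sol_def stadd_def stscale_def stzero_def algebra_simps)

lemma geom_simple:
  assumes k: "\<kappa> > 0" and w: "w > 0" and c: "\<bar>c\<bar> > 1" and d: "detM \<kappa> w c z = 0"
  shows "geometrically_simple \<kappa> w c z"
proof -
  have c0: "c \<noteq> 0" using c by auto
  obtain e1 e2 where ne: "adj1 \<kappa> w c e1 e2 z \<noteq> 0 \<or> adj2 \<kappa> w c e1 e2 z \<noteq> 0"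
    and sp: "\<And>x y. m11 \<kappa> w c z * x + m12 \<kappa> w c z * y = 0 \<and> m21 \<kappa> w c z * x + m22 \<kappa> w c z * y = 0 \<Longrightarrow>
        (\<exists>t. x = t * adj1 \<kappa> w c e1 e2 z \<and> y = t * adj2 \<kappa> w c e1 e2 z)"
    using adj_choice[OF k w c, of z] by blast
  define a1 where "a1 = adj1 \<kappa> w c e1 e2 z"
  define a2 where "a2 = adj2 \<kappa> w c e1 e2 z"
  define b where "b = (\<lambda>i::nat. Sol z a1 a2 stzero)"
  show ?thesis unfolding geometrically_simple_def has_dim_def
  proof (intro exI[of _ b] conjI allI impI ballI)
    fix i :: nat assume "i < 1"
    have "b i \<in> Dsp" unfolding b_def by (rule Sol_Dsp[OF stzero_Xsp])
    moreover have "zmL z \<kappa> w c (b i) = stzero" unfolding b_def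
      by (rule Sol_zmL[OF stzero_Xsp c0]) (use adj_M[of \<kappa> w c z e1 e2] d in \<open>simp_all add: a1_def a2_def\<close>)
    ultimately show "b i \<in> kerpow \<kappa> w c z 1" by simp
  next
    fix a :: "nat \<Rightarrow> complex" and i :: nat assume h: "lincomb a b 1 = stzero" "i < 1"
    have h1: "stadd (stscale (a 0) (b 0)) stzero = stzero" using h(1) unfolding lincomb_1 .
    have "a 0 * a1 = 0" "a 0 * a2 = 0"
      using arg_cong[OF h1, of p1] arg_cong[OF h1, of p2]
      by (simp_all add: stadd_def stscale_def stzero_def b_def Sol_def)
    then show "a i = 0" using h(2) ne unfolding a1_def[symmetric] a2_def[symmetric] by auto
  next
    fix U assume "U \<in> kerpow \<kappa> w c z 1"
    then have U: "U \<in> Dsp" and zU: "zmL z \<kappa> w c U = stzero" by auto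
    note ch = charA[OF U c0, where z=z and \<kappa>=\<kappa> and w=w, unfolded zU]
    obtain t where t: "p1 U = t * a1" "p2 U = t * a2"
      using sp[of "p1 U" "p2 U"] ch(2,3) unfolding a1_def a2_def by auto
    show "\<exists>a. U = lincomb a b 1"
    proof (rule exI[of _ "\<lambda>_. t"])
      have "lincomb (\<lambda>_. t) b 1 = Sol z (p1 U) (p2 U) stzero"
        unfolding lincomb_1 b_def t Sol_zero_scale by (rule refl)
      then show "U = lincomb (\<lambda>_. t) b 1" using ch(1) by simp
    qed
  qed
qed


definition comps :: "(st \<Rightarrow> complex) set" where
  "comps = {p1, p2, xi1, xi2} \<union> {(\<lambda>U. P1 U v) | v. True} \<union> {(\<lambda>U. P2 U v) | v. True}"

lemma comps_lin:
  assumes "cf \<in> comps"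
  shows "cf (stadd U V) = cf U + cf V" "cf (stscale t U) = t * cf U" "cf stzero = 0"
  using assms unfolding comps_def by (auto simp: stadd_def stscale_def stzero_def)

lemma comps_simps:
  "p1 \<in> comps" "p2 \<in> comps" "xi1 \<in> comps" "xi2 \<in> comps" "(\<lambda>U. P1 U v) \<in> comps" "(\<lambda>U. P2 U v) \<in> comps"
  unfolding comps_def by blast+

lemma st_eq_comps:
  assumes "\<And>cf. cf \<in> comps \<Longrightarrow> cf U = cf V"
  shows "U = V"
proof (rule st_eqI)
  show "p1 U = p1 V" "p2 U = p2 V" "xi1 U = xi1 V" "xi2 U = xi2 V"
    using assms comps_simps by auto
  show "P1 U = P1 V" using assms[OF comps_simps(5)] by auto
  show "P2 U = P2 V" using assms[OF comps_simps(6)] by auto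
qed

lemma comp_foldr:
  assumes "cf \<in> comps"
  shows "cf (foldr (\<lambda>i U. stadd (stscale (a i) (b i)) U) xs stzero) = sum_list (map (\<lambda>i. a i * cf (b i)) xs)"
  by (induction xs) (simp_all add: comps_lin[OF assms])

lemma comp_lincomb:
  assumes "cf \<in> comps"
  shows "cf (lincomb a b n) = (\<Sum>i<n. a i * cf (b i))"
  unfolding lincomb_def comp_foldr[OF assms] interv_sum_list_conv_sum_set_nat
  by (simp add: atLeast0LessThan)

lemma dI_add:
  assumes "C1_on P" "C1_on Q"
  shows "dI (\<lambda>v. P v + Q v) v = dI P v + dI Q v"
proof (cases "v \<in> {-1..1}")
  case True
  show ?thesis by (rule dI_eq[OF True has_vector_derivative_add[OF C1_deriv[OF assms(1) True] C1_deriv[OF assms(2) True]]])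
next
  case False
  then show ?thesis unfolding dI_def by (simp only: if_False) simp
qed

lemma dI_scale:
  assumes "C1_on P"
  shows "dI (\<lambda>v. a * P v) v = a * dI P v"
proof (cases "v \<in> {-1..1}")
  case True
  show ?thesis using dI_eq[OF True has_vector_derivative_mult[OF has_vector_derivative_const C1_deriv[OF assms True]]]
    by simp
next
  case False
  then show ?thesis unfolding dI_def by (simp only: if_False) simp
qed

lemma C1_add:
  assumes "C1_on P" "C1_on Q"
  shows "C1_on (\<lambda>v. P v + Q v)"
  by (rule C1_onI[where D="\<lambda>v. dI P v + dI Q v"])
     (auto intro!: has_vector_derivative_add C1_deriv assms continuous_intros C1_dI_cont)

lemma C1_scale:
  assumes "C1_on P"
  shows "C1_on (\<lambda>v. a * P v)"
proof (rule C1_onI[where D="\<lambda>v. a * dI P v"])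
  fix v :: real assume v: "v \<in> {-1..1}"
  show "((\<lambda>v. a * P v) has_vector_derivative a * dI P v) (at v within {-1..1})"
    using has_vector_derivative_mult[OF has_vector_derivative_const C1_deriv[OF assms v]] by simp
qed (intro continuous_intros C1_dI_cont assms)

lemma Dsp_add: "U \<in> Dsp \<Longrightarrow> V \<in> Dsp \<Longrightarrow> stadd U V \<in> Dsp"
  unfolding Dsp_def Xsp_def stadd_def
  by (auto intro!: continuous_intros C1_add)

lemma Dsp_scale: "U \<in> Dsp \<Longrightarrow> stscale t U \<in> Dsp"
  unfolding Dsp_def Xsp_def stscale_def
  by (auto intro!: continuous_intros C1_scale)

lemma zmL_add:
  assumes "U \<in> Dsp" "V \<in> Dsp"
  shows "zmL z \<kappa> w c (stadd U V) = stadd (zmL z \<kappa> w c U) (zmL z \<kappa> w c V)"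
proof -
  have a: "C1_on (P1 U)" "C1_on (P2 U)" "C1_on (P1 V)" "C1_on (P2 V)" using assms unfolding Dsp_def by auto
  show ?thesis
    by (rule st_eqI) (auto simp: zmL_simps stadd_def dI_add[OF a(1,3)] dI_add[OF a(2,4)] algebra_simps add_divide_distrib[symmetric])
qed

lemma zmL_scale:
  assumes "U \<in> Dsp"
  shows "zmL z \<kappa> w c (stscale t U) = stscale t (zmL z \<kappa> w c U)"
proof -
  have a: "C1_on (P1 U)" "C1_on (P2 U)" using assms unfolding Dsp_def by auto
  show ?thesis
    by (rule st_eqI) (auto simp: zmL_simps stscale_def dI_scale[OF a(1)] dI_scale[OF a(2)] algebra_simps times_divide_eq_right[symmetric])
qed

lemma foldr_Dsp:
  assumes "\<And>i. i \<in> set xs \<Longrightarrow> b i \<in> Dsp"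
  shows "foldr (\<lambda>i U. stadd (stscale (a i) (b i)) U) xs stzero \<in> Dsp"
  using assms by (induction xs) (auto intro!: Dsp_add Dsp_scale stzero_Dsp)

lemma lincomb_Dsp:
  assumes "\<And>i. i < n \<Longrightarrow> b i \<in> Dsp"
  shows "lincomb a b n \<in> Dsp"
  unfolding lincomb_def by (rule foldr_Dsp) (use assms in auto)

lemma foldr_zmL:
  assumes "\<And>i. i \<in> set xs \<Longrightarrow> b i \<in> Dsp"
  shows "zmL z \<kappa> w c (foldr (\<lambda>i U. stadd (stscale (a i) (b i)) U) xs stzero)
     = foldr (\<lambda>i U. stadd (stscale (a i) (zmL z \<kappa> w c (b i))) U) xs stzero"
  using assms
proof (induction xs)
  case Nil then show ?case by (simp add: zmL_stzero)
next
  case (Cons x xs)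
  have bx: "b x \<in> Dsp" using Cons by simp
  have f: "foldr (\<lambda>i U. stadd (stscale (a i) (b i)) U) xs stzero \<in> Dsp"
    by (rule foldr_Dsp) (use Cons in auto)
  show ?case using Cons
    by (simp add: zmL_add[OF Dsp_scale[OF bx] f] zmL_scale[OF bx])
qed

lemma lincomb_zmL:
  assumes "\<And>i. i < n \<Longrightarrow> b i \<in> Dsp"
  shows "zmL z \<kappa> w c (lincomb a b n) = lincomb a (\<lambda>i. zmL z \<kappa> w c (b i)) n"
  unfolding lincomb_def by (rule foldr_zmL) (use assms in auto)

lemma kerpow_Dsp: "U \<in> kerpow \<kappa> w c z (Suc k) \<Longrightarrow> U \<in> Dsp" by simp

lemma kerpow_scale: "U \<in> kerpow \<kappa> w c z k \<Longrightarrow> stscale t U \<in> kerpow \<kappa> w c z k"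
proof (induction k arbitrary: U)
  case 0
  then show ?case by (simp add: stscale_def stzero_def)
next
  case (Suc k)
  then show ?case by (auto simp: zmL_scale intro: Dsp_scale)
qed

definition tc :: "complex \<Rightarrow> (complex \<Rightarrow> complex) \<Rightarrow> nat \<Rightarrow> complex" where
  "tc z0 f n = (deriv ^^ n) f z0 / fact n"

lemma tc_0[simp]: "tc z0 f 0 = f z0" unfolding tc_def by simp

lemma tc_add:
  assumes "f holomorphic_on UNIV" "g holomorphic_on UNIV"
  shows "tc z0 (\<lambda>x. f x + g x) n = tc z0 f n + tc z0 g n"
  unfolding tc_def higher_deriv_add[OF assms open_UNIV UNIV_I] by (simp add: add_divide_distrib)

lemma tc_diff:
  assumes "f holomorphic_on UNIV" "g holomorphic_on UNIV"
  shows "tc z0 (\<lambda>x. f x - g x) n = tc z0 f n - tc z0 g n"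
  unfolding tc_def higher_deriv_diff[OF assms open_UNIV UNIV_I] by (simp add: diff_divide_distrib)

lemma tc_cmult:
  assumes "f holomorphic_on UNIV"
  shows "tc z0 (\<lambda>x. k * f x) n = k * tc z0 f n"
  unfolding tc_def higher_deriv_cmult[OF assms UNIV_I open_UNIV] by simp

lemma tc_mult:
  assumes "f holomorphic_on UNIV" "g holomorphic_on UNIV"
  shows "tc z0 (\<lambda>x. f x * g x) n = (\<Sum>i\<le>n. tc z0 f i * tc z0 g (n - i))"
proof -
  have "tc z0 (\<lambda>x. f x * g x) n = (\<Sum>i = 0..n. of_nat (n choose i) * (deriv ^^ i) f z0 * (deriv ^^ (n-i)) g z0) / fact n"
    unfolding tc_def higher_deriv_mult[OF assms open_UNIV UNIV_I] ..
  also have "\<dots> = (\<Sum>i = 0..n. of_nat (n choose i) * (deriv ^^ i) f z0 * (deriv ^^ (n-i)) g z0 / fact n)"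
    by (simp add: sum_divide_distrib)
  also have "\<dots> = (\<Sum>i = 0..n. tc z0 f i * tc z0 g (n - i))"
  proof (rule sum.cong[OF refl])
    fix i assume "i \<in> {0..n}"
    then have i: "i \<le> n" by simp
    have "(of_nat (n choose i) :: complex) = fact n / (fact i * fact (n - i))" by (rule binomial_fact[OF i])
    then show "of_nat (n choose i) * (deriv ^^ i) f z0 * (deriv ^^ (n-i)) g z0 / fact n = tc z0 f i * tc z0 g (n - i)"
      unfolding tc_def by (simp add: field_simps)
  qed
  finally show ?thesis by (simp add: atLeast0AtMost)
qed

lemma deriv_funpow_exp: "(deriv ^^ n) exp = exp"
  by (induction n) (simp_all add: DERIV_imp_deriv[OF DERIV_exp])

lemma tc_exp: "tc z0 exp n = exp z0 / fact n"
  unfolding tc_def deriv_funpow_exp ..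

lemma deriv_funpow_expm: "(deriv ^^ n) (\<lambda>x. exp (- x)) = (\<lambda>x. (-1)^n * exp (- x :: complex))"
proof (induction n)
  case (Suc n)
  have "deriv (\<lambda>x. (-1)^n * exp (- x :: complex)) = (\<lambda>x. (-1)^Suc n * exp (- x))"
  proof
    fix x :: complex
    have "((\<lambda>x. (-1)^n * exp (- x :: complex)) has_field_derivative (-1)^Suc n * exp (- x)) (at x)"
      by (auto intro!: derivative_eq_intros)
    then show "deriv (\<lambda>x. (-1)^n * exp (- x :: complex)) x = (-1)^Suc n * exp (- x)"
      by (rule DERIV_imp_deriv)
  qed
  then show ?case using Suc by simp
qed simp

lemma tc_expm: "tc z0 (\<lambda>x. exp (- x)) n = (-1)^n * exp (- z0) / fact n"
  unfolding tc_def deriv_funpow_expm ..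

lemma deriv_funpow_id: "(deriv ^^ Suc (Suc n)) (\<lambda>x::complex. x) = (\<lambda>x. 0)"
proof (induction n)
  case 0
  have d1: "deriv (\<lambda>x::complex. x) = (\<lambda>x. 1)" by (rule ext) simp
  have d0: "deriv (\<lambda>x::complex. 1) = (\<lambda>x. 0)" by (rule ext) simp
  show ?case by (simp add: d1 d0)
next
  case (Suc n)
  have "deriv (\<lambda>x::complex. 0) = (\<lambda>x. 0)" by (rule ext) simp
  then show ?case using Suc by simp
qed

lemma tc_id: "tc z0 (\<lambda>x. x) n = (if n = 0 then z0 else if n = 1 then 1 else 0)"
proof -
  have d1: "deriv (\<lambda>x::complex. x) = (\<lambda>x. 1)" by (rule ext) simp
  show ?thesis
  proof (cases n)
    case 0 then show ?thesis by simp
  next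
    case (Suc k) then show ?thesis
      by (cases k) (simp_all add: tc_def d1 deriv_funpow_id del: funpow.simps)
  qed
qed

lemma tc_idmult:
  assumes "f holomorphic_on UNIV"
  shows "tc z0 (\<lambda>x. x * f x) (Suc n) = z0 * tc z0 f (Suc n) + tc z0 f n"
proof -
  have h: "(\<lambda>x::complex. x) holomorphic_on UNIV" by (intro holomorphic_intros)
  have "tc z0 (\<lambda>x. x * f x) (Suc n) = (\<Sum>i\<le>Suc n. tc z0 (\<lambda>x. x) i * tc z0 f (Suc n - i))"
    by (rule tc_mult[OF h assms])
  also have "\<dots> = z0 * tc z0 f (Suc n) + (\<Sum>i\<le>n. tc z0 (\<lambda>x. x) (Suc i) * tc z0 f (n - i))"
    unfolding sum.atMost_Suc_shift by (simp add: tc_id)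
  also have "(\<Sum>i\<le>n. tc z0 (\<lambda>x. x) (Suc i) * tc z0 f (n - i)) = (\<Sum>i\<le>n. (if i = 0 then tc z0 f (n - i) else 0))"
    by (rule sum.cong) (simp_all add: tc_id)
  also have "\<dots> = tc z0 f n" by (subst sum.delta) simp_all
  finally show ?thesis .
qed


definition pe :: "(nat \<Rightarrow> complex) \<Rightarrow> nat \<Rightarrow> complex \<Rightarrow> complex" where
  "pe \<beta> n x = (\<Sum>i\<le>n. x ^ i / fact i * \<beta> (n - i))"

lemma pe_at0[simp]: "pe \<beta> n 0 = \<beta> n"
proof -
  have "pe \<beta> n 0 = (\<Sum>i\<le>n. (if i = 0 then \<beta> (n - i) else 0))"
    unfolding pe_def by (rule sum.cong) auto
  also have "\<dots> = \<beta> n" by (subst sum.delta) simp_all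
  finally show ?thesis .
qed

lemma pe_0[simp]: "pe \<beta> 0 x = \<beta> 0"
  unfolding pe_def by simp

lemma pe_deriv:
  "((\<lambda>x. pe \<beta> (Suc n) x) has_field_derivative pe \<beta> n x) (at x)"
proof -
  have d: "((\<lambda>x. x ^ i / fact i * \<beta> (Suc n - i)) has_field_derivative
       (of_nat i * x ^ (i - 1)) / fact i * \<beta> (Suc n - i)) (at x)" for i
    by (auto intro!: derivative_eq_intros)
  have "((\<lambda>x. pe \<beta> (Suc n) x) has_field_derivative
     (\<Sum>i\<le>Suc n. (of_nat i * x ^ (i - 1)) / fact i * \<beta> (Suc n - i))) (at x)"
    unfolding pe_def by (rule DERIV_sum) (rule d)
  also have "(\<Sum>i\<le>Suc n. (of_nat i * x ^ (i - 1)) / fact i * \<beta> (Suc n - i)) = pe \<beta> n x"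
  proof -
    have "(\<Sum>i\<le>Suc n. (of_nat i * x ^ (i - 1)) / fact i * \<beta> (Suc n - i))
       = (\<Sum>i\<le>n. (of_nat (Suc i) * x ^ i) / fact (Suc i) * \<beta> (n - i))"
      unfolding sum.atMost_Suc_shift by simp
    also have "\<dots> = pe \<beta> n x"
    proof (unfold pe_def, rule sum.cong[OF refl])
      fix i
      have "(of_nat (Suc i) * x ^ i) / fact (Suc i) = x ^ i / (fact i :: complex)"
        by (subst fact_Suc) (simp del: of_nat_Suc)
      then show "(of_nat (Suc i) * x ^ i) / fact (Suc i) * \<beta> (n - i) = x ^ i / fact i * \<beta> (n - i)" by simp
    qed
    finally show ?thesis .
  qed
  finally show ?thesis .
qed

lemma pe_cont: "continuous_on S (pe \<beta> n)"
  unfolding pe_def by (intro continuous_intros) auto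

lemma C1_ext:
  assumes gd: "\<And>x. (g has_field_derivative g' x) (at x)" and gc: "continuous_on UNIV g'"
  shows "C1_on (\<lambda>v. if v \<in> {-1..1} then g (of_real v) else 0)"
    "\<And>v. v \<in> {-1..1} \<Longrightarrow> dI (\<lambda>v. if v \<in> {-1..1} then g (of_real v) else 0) v = g' (of_real v)"
    "continuous_on {-1..1} (\<lambda>v. if v \<in> {-1..1} then g (of_real v) else 0)"
proof -
  have der: "((\<lambda>v. if v \<in> {-1..1} then g (of_real v) else 0) has_vector_derivative g' (of_real v)) (at v within {-1..1})"
    if v: "v \<in> {-1..1}" for v
    by (rule has_vector_derivative_transform[OF v _ has_vector_derivative_real_field[OF gd]]) simp
  have dc: "continuous_on {-1..1} (\<lambda>v::real. g' (of_real v))"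
    by (rule continuous_on_compose2[OF gc]) (auto intro: continuous_intros)
  show "C1_on (\<lambda>v. if v \<in> {-1..1} then g (of_real v) else 0)"
    by (rule C1_onI[OF der dc])
  show "\<And>v. v \<in> {-1..1} \<Longrightarrow> dI (\<lambda>v. if v \<in> {-1..1} then g (of_real v) else 0) v = g' (of_real v)"
    by (rule dI_eq[OF _ der])
  show "continuous_on {-1..1} (\<lambda>v. if v \<in> {-1..1} then g (of_real v) else 0)"
    by (rule cont_of_deriv[OF der])
qed

lemma expPe_deriv_Suc:
  "((\<lambda>x. exp (z0 * x) * pe \<beta> (Suc n) x) has_field_derivative
     z0 * (exp (z0 * x) * pe \<beta> (Suc n) x) + exp (z0 * x) * pe \<beta> n x) (at x)"
  by (rule derivative_eq_intros pe_deriv refl | simp add: algebra_simps)+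

lemma expPe_deriv_0:
  "((\<lambda>x. exp (z0 * x) * pe \<beta> 0 x) has_field_derivative z0 * (exp (z0 * x) * pe \<beta> 0 x)) (at x)"
  by (auto intro!: derivative_eq_intros)

lemma expPe_cont: "continuous_on UNIV (\<lambda>x. z0 * (exp (z0 * x) * pe \<beta> m x) + exp (z0 * x) * pe \<beta> n x)"
  by (intro continuous_intros pe_cont)

lemma expPe_cont0: "continuous_on UNIV (\<lambda>x. z0 * (exp (z0 * x) * pe \<beta> 0 x))"
  by (intro continuous_intros pe_cont)


lemma hol_m:
  "(\<lambda>x. m11 \<kappa> w c x) holomorphic_on UNIV" "(\<lambda>x. m12 \<kappa> w c x) holomorphic_on UNIV"
  "(\<lambda>x. m21 \<kappa> w c x) holomorphic_on UNIV" "(\<lambda>x. m22 \<kappa> w c x) holomorphic_on UNIV"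
  unfolding m11_def m12_def m21_def m22_def by (intro holomorphic_intros)+

lemma hol_adj:
  "(\<lambda>x. adj1 \<kappa> w c e1 e2 x) holomorphic_on UNIV" "(\<lambda>x. adj2 \<kappa> w c e1 e2 x) holomorphic_on UNIV"
  unfolding adj1_def adj2_def by (intro holomorphic_intros hol_m)+

lemma hol_det: "(\<lambda>x. detM \<kappa> w c x) holomorphic_on UNIV"
  unfolding detM_eq by (intro holomorphic_intros hol_m)

locale mset =
  fixes \<kappa> w c :: real and z0 e1 e2 :: complex
  assumes cnz: "c \<noteq> 0" and dz: "detM \<kappa> w c z0 = 0"
    and ne: "adj1 \<kappa> w c e1 e2 z0 \<noteq> 0 \<or> adj2 \<kappa> w c e1 e2 z0 \<noteq> 0"
    and sp: "\<And>x y. m11 \<kappa> w c z0 * x + m12 \<kappa> w c z0 * y = 0 \<Longrightarrow> m21 \<kappa> w c z0 * x + m22 \<kappa> w c z0 * y = 0 \<Longrightarrow>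
        \<exists>t. x = t * adj1 \<kappa> w c e1 e2 z0 \<and> y = t * adj2 \<kappa> w c e1 e2 z0"
    and dnz: "\<exists>n. tc z0 (detM \<kappa> w c) n \<noteq> 0"
begin

abbreviation "A1 \<equiv> adj1 \<kappa> w c e1 e2"
abbreviation "A2 \<equiv> adj2 \<kappa> w c e1 e2"

definition al1 :: "nat \<Rightarrow> complex" where "al1 n = tc z0 A1 n"
definition al2 :: "nat \<Rightarrow> complex" where "al2 n = tc z0 A2 n"

definition Ef :: "nat \<Rightarrow> st" where
  "Ef n = \<lparr> p1 = al1 n, p2 = al2 n, xi1 = tc z0 (\<lambda>x. x * A1 x) n, xi2 = tc z0 (\<lambda>x. x * A2 x) n,
     P1 = (\<lambda>v. if v \<in> {-1..1} then exp (z0 * of_real v) * pe al1 n (of_real v) else 0),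
     P2 = (\<lambda>v. if v \<in> {-1..1} then exp (z0 * of_real v) * pe al2 n (of_real v) else 0) \<rparr>"

definition Gs :: "complex \<Rightarrow> st" where
  "Gs t = \<lparr> p1 = 0, p2 = 0, xi1 = t * e1 / (of_real c)\<^sup>2, xi2 = t * e2 / (of_real c)\<^sup>2,
     P1 = (\<lambda>_. 0), P2 = (\<lambda>_. 0) \<rparr>"

lemma hA1: "(\<lambda>x. A1 x) holomorphic_on UNIV" by (rule hol_adj)
lemma hA2: "(\<lambda>x. A2 x) holomorphic_on UNIV" by (rule hol_adj)

lemma Pef_C1:
  fixes \<beta> :: "nat \<Rightarrow> complex"
  shows "C1_on (\<lambda>v. if v \<in> {-1..1} then exp (z0 * of_real v) * pe \<beta> n (of_real v) else 0)"
    "continuous_on {-1..1} (\<lambda>v. if v \<in> {-1..1} then exp (z0 * of_real v) * pe \<beta> n (of_real v) else 0)"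
proof -
  have "C1_on (\<lambda>v. if v \<in> {-1..1} then exp (z0 * of_real v) * pe \<beta> n (of_real v) else 0) \<and>
     continuous_on {-1..1} (\<lambda>v. if v \<in> {-1..1} then exp (z0 * of_real v) * pe \<beta> n (of_real v) else 0)"
  proof (cases n)
    case 0
    show ?thesis unfolding 0 using C1_ext[OF expPe_deriv_0[of z0 \<beta>] expPe_cont0] by blast
  next
    case (Suc k)
    show ?thesis unfolding Suc using C1_ext[OF expPe_deriv_Suc[of z0 \<beta> k] expPe_cont] by blast
  qed
  then show "C1_on (\<lambda>v. if v \<in> {-1..1} then exp (z0 * of_real v) * pe \<beta> n (of_real v) else 0)"
    "continuous_on {-1..1} (\<lambda>v. if v \<in> {-1..1} then exp (z0 * of_real v) * pe \<beta> n (of_real v) else 0)"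
    by blast+
qed

lemma Pef_dI:
  fixes \<beta> :: "nat \<Rightarrow> complex"
  assumes v: "v \<in> {-1..1}"
  shows "dI (\<lambda>v. if v \<in> {-1..1} then exp (z0 * of_real v) * pe \<beta> (Suc n) (of_real v) else 0) v
      = z0 * (exp (z0 * of_real v) * pe \<beta> (Suc n) (of_real v)) + exp (z0 * of_real v) * pe \<beta> n (of_real v)"
    "dI (\<lambda>v. if v \<in> {-1..1} then exp (z0 * of_real v) * pe \<beta> 0 (of_real v) else 0) v
      = z0 * (exp (z0 * of_real v) * pe \<beta> 0 (of_real v))"
  using C1_ext(2)[OF expPe_deriv_Suc[of z0 \<beta> n] expPe_cont v] C1_ext(2)[OF expPe_deriv_0[of z0 \<beta>] expPe_cont0 v]
  by simp_all

lemma Ef_Dsp: "Ef n \<in> Dsp"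
  unfolding Dsp_def Xsp_def Ef_def using Pef_C1[of al1 n] Pef_C1[of al2 n] by simp

lemma Pef_1: "exp z0 * pe \<beta> n 1 = (\<Sum>i\<le>n. tc z0 exp i * \<beta> (n - i))"
  unfolding pe_def tc_exp sum_distrib_left by (rule sum.cong) auto

lemma Pef_m1: "exp (- z0) * pe \<beta> n (-1) = (\<Sum>i\<le>n. tc z0 (\<lambda>x. exp (- x)) i * \<beta> (n - i))"
  unfolding pe_def tc_expm sum_distrib_left by (rule sum.cong) auto

lemma Ef_P2_pm:
  "P2 (Ef n) 1 = tc z0 (\<lambda>x. exp x * A2 x) n"
  "P2 (Ef n) (-1) = tc z0 (\<lambda>x. exp (- x) * A2 x) n"
  "P1 (Ef n) 1 = tc z0 (\<lambda>x. exp x * A1 x) n"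
  "P1 (Ef n) (-1) = tc z0 (\<lambda>x. exp (- x) * A1 x) n"
proof -
  have he: "(\<lambda>x. exp x) holomorphic_on UNIV" "(\<lambda>x. exp (- x)) holomorphic_on UNIV" by (intro holomorphic_intros)+
  show "P2 (Ef n) 1 = tc z0 (\<lambda>x. exp x * A2 x) n"
    unfolding tc_mult[OF he(1) hA2] using Pef_1[of al2 n] by (simp add: Ef_def al2_def)
  show "P2 (Ef n) (-1) = tc z0 (\<lambda>x. exp (- x) * A2 x) n"
    unfolding tc_mult[OF he(2) hA2] using Pef_m1[of al2 n] by (simp add: Ef_def al2_def)
  show "P1 (Ef n) 1 = tc z0 (\<lambda>x. exp x * A1 x) n"
    unfolding tc_mult[OF he(1) hA1] using Pef_1[of al1 n] by (simp add: Ef_def al1_def)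
  show "P1 (Ef n) (-1) = tc z0 (\<lambda>x. exp (- x) * A1 x) n"
    unfolding tc_mult[OF he(2) hA1] using Pef_m1[of al1 n] by (simp add: Ef_def al1_def)
qed

lemma ident1:
  "(of_real c)\<^sup>2 * tc z0 (\<lambda>x. x * (x * A1 x)) n + (1 + of_real \<kappa>) * al1 n
     - tc z0 (\<lambda>x. exp x * A2 x) n - of_real \<kappa> * tc z0 (\<lambda>x. exp (- x) * A2 x) n
   = e1 * tc z0 (detM \<kappa> w c) n"
proof -
  have fe: "(\<lambda>x. (of_real c)\<^sup>2 * (x * (x * A1 x)) + (1 + of_real \<kappa>) * A1 x - exp x * A2 x - of_real \<kappa> * (exp (- x) * A2 x))
      = (\<lambda>x. e1 * detM \<kappa> w c x)"
  proof
    fix x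
    have "(of_real c)\<^sup>2 * (x * (x * A1 x)) + (1 + of_real \<kappa>) * A1 x - exp x * A2 x - of_real \<kappa> * (exp (- x) * A2 x)
       = m11 \<kappa> w c x * A1 x + m12 \<kappa> w c x * A2 x"
      unfolding m11_def m12_def by (simp add: algebra_simps power2_eq_square)
    also have "\<dots> = e1 * detM \<kappa> w c x" using adj_M(1)[of \<kappa> w c x e1 e2] by simp
    finally show "(of_real c)\<^sup>2 * (x * (x * A1 x)) + (1 + of_real \<kappa>) * A1 x - exp x * A2 x - of_real \<kappa> * (exp (- x) * A2 x)
      = e1 * detM \<kappa> w c x" .
  qed
  have h1: "(\<lambda>x. x * (x * A1 x)) holomorphic_on UNIV" by (intro holomorphic_intros hA1)
  have h2: "(\<lambda>x. exp x * A2 x) holomorphic_on UNIV" by (intro holomorphic_intros hA2)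
  have h3: "(\<lambda>x. exp (- x) * A2 x) holomorphic_on UNIV" by (intro holomorphic_intros hA2)
  have h1': "(\<lambda>x. (of_real c)\<^sup>2 * (x * (x * A1 x))) holomorphic_on UNIV" by (intro holomorphic_intros hA1)
  have h2': "(\<lambda>x. (1 + of_real \<kappa>) * A1 x) holomorphic_on UNIV" by (intro holomorphic_intros hA1)
  have h3': "(\<lambda>x. of_real \<kappa> * (exp (- x) * A2 x)) holomorphic_on UNIV" by (intro holomorphic_intros hA2)
  have h12: "(\<lambda>x. (of_real c)\<^sup>2 * (x * (x * A1 x)) + (1 + of_real \<kappa>) * A1 x) holomorphic_on UNIV"
    by (intro holomorphic_intros hA1)
  have h123: "(\<lambda>x. (of_real c)\<^sup>2 * (x * (x * A1 x)) + (1 + of_real \<kappa>) * A1 x - exp x * A2 x) holomorphic_on UNIV"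
    by (intro holomorphic_intros hA1 hA2)
  have "e1 * tc z0 (detM \<kappa> w c) n = tc z0 (\<lambda>x. e1 * detM \<kappa> w c x) n"
    by (rule tc_cmult[symmetric]) (rule hol_det)
  also have "\<dots> = tc z0 (\<lambda>x. (of_real c)\<^sup>2 * (x * (x * A1 x)) + (1 + of_real \<kappa>) * A1 x - exp x * A2 x - of_real \<kappa> * (exp (- x) * A2 x)) n"
    unfolding fe ..
  also have "\<dots> = (of_real c)\<^sup>2 * tc z0 (\<lambda>x. x * (x * A1 x)) n + (1 + of_real \<kappa>) * al1 n
     - tc z0 (\<lambda>x. exp x * A2 x) n - of_real \<kappa> * tc z0 (\<lambda>x. exp (- x) * A2 x) n"
    unfolding tc_diff[OF h123 h3'] tc_diff[OF h12 h2] tc_add[OF h1' h2'] tc_cmult[OF h1] tc_cmult[OF hA1] tc_cmult[OF h3]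
      al1_def ..
  finally show ?thesis ..
qed

lemma ident2:
  "(of_real c)\<^sup>2 * tc z0 (\<lambda>x. x * (x * A2 x)) n + of_real w * (1 + of_real \<kappa>) * al2 n
     - of_real w * of_real \<kappa> * tc z0 (\<lambda>x. exp x * A1 x) n - of_real w * tc z0 (\<lambda>x. exp (- x) * A1 x) n
   = e2 * tc z0 (detM \<kappa> w c) n"
proof -
  have fe: "(\<lambda>x. (of_real c)\<^sup>2 * (x * (x * A2 x)) + of_real w * (1 + of_real \<kappa>) * A2 x - of_real w * of_real \<kappa> * (exp x * A1 x) - of_real w * (exp (- x) * A1 x))
      = (\<lambda>x. e2 * detM \<kappa> w c x)"
  proof
    fix x
    have "(of_real c)\<^sup>2 * (x * (x * A2 x)) + of_real w * (1 + of_real \<kappa>) * A2 x - of_real w * of_real \<kappa> * (exp x * A1 x) - of_real w * (exp (- x) * A1 x)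
       = m21 \<kappa> w c x * A1 x + m22 \<kappa> w c x * A2 x"
      unfolding m21_def m22_def by (simp add: algebra_simps power2_eq_square)
    also have "\<dots> = e2 * detM \<kappa> w c x" using adj_M(2)[of \<kappa> w c x e1 e2] by simp
    finally show "(of_real c)\<^sup>2 * (x * (x * A2 x)) + of_real w * (1 + of_real \<kappa>) * A2 x - of_real w * of_real \<kappa> * (exp x * A1 x) - of_real w * (exp (- x) * A1 x)
      = e2 * detM \<kappa> w c x" .
  qed
  have h1: "(\<lambda>x. x * (x * A2 x)) holomorphic_on UNIV" by (intro holomorphic_intros hA2)
  have h2: "(\<lambda>x. exp x * A1 x) holomorphic_on UNIV" by (intro holomorphic_intros hA1)
  have h3: "(\<lambda>x. exp (- x) * A1 x) holomorphic_on UNIV" by (intro holomorphic_intros hA1)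
  have h1': "(\<lambda>x. (of_real c)\<^sup>2 * (x * (x * A2 x))) holomorphic_on UNIV" by (intro holomorphic_intros hA2)
  have h2': "(\<lambda>x. of_real w * (1 + of_real \<kappa>) * A2 x) holomorphic_on UNIV" by (intro holomorphic_intros hA2)
  have h2'': "(\<lambda>x. of_real w * of_real \<kappa> * (exp x * A1 x)) holomorphic_on UNIV" by (intro holomorphic_intros hA1)
  have h3': "(\<lambda>x. of_real w * (exp (- x) * A1 x)) holomorphic_on UNIV" by (intro holomorphic_intros hA1)
  have h12: "(\<lambda>x. (of_real c)\<^sup>2 * (x * (x * A2 x)) + of_real w * (1 + of_real \<kappa>) * A2 x) holomorphic_on UNIV"
    by (intro holomorphic_intros hA2)
  have h123: "(\<lambda>x. (of_real c)\<^sup>2 * (x * (x * A2 x)) + of_real w * (1 + of_real \<kappa>) * A2 x - of_real w * of_real \<kappa> * (exp x * A1 x)) holomorphic_on UNIV"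
    by (intro holomorphic_intros hA1 hA2)
  have "e2 * tc z0 (detM \<kappa> w c) n = tc z0 (\<lambda>x. e2 * detM \<kappa> w c x) n"
    by (rule tc_cmult[symmetric]) (rule hol_det)
  also have "\<dots> = tc z0 (\<lambda>x. (of_real c)\<^sup>2 * (x * (x * A2 x)) + of_real w * (1 + of_real \<kappa>) * A2 x - of_real w * of_real \<kappa> * (exp x * A1 x) - of_real w * (exp (- x) * A1 x)) n"
    unfolding fe ..
  also have "\<dots> = (of_real c)\<^sup>2 * tc z0 (\<lambda>x. x * (x * A2 x)) n + of_real w * (1 + of_real \<kappa>) * al2 n
     - of_real w * of_real \<kappa> * tc z0 (\<lambda>x. exp x * A1 x) n - of_real w * tc z0 (\<lambda>x. exp (- x) * A1 x) n"
    unfolding tc_diff[OF h123 h3'] tc_diff[OF h12 h2''] tc_add[OF h1' h2'] tc_cmult[OF h1] tc_cmult[OF hA2]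
      tc_cmult[OF h3] tc_cmult[OF h2] al2_def ..
  finally show ?thesis ..
qed

lemma zmL_Ef_Suc:
  "zmL z0 \<kappa> w c (Ef (Suc n)) = stadd (stscale (-1) (Ef n)) (Gs (tc z0 (detM \<kappa> w c) (Suc n)))"
proof (rule st_eqI)
  have c2: "(of_real c :: complex)\<^sup>2 \<noteq> 0" using cnz by simp
  have hx1: "(\<lambda>x. x * A1 x) holomorphic_on UNIV" by (intro holomorphic_intros hA1)
  have hx2: "(\<lambda>x. x * A2 x) holomorphic_on UNIV" by (intro holomorphic_intros hA2)
  note S1 = tc_idmult[OF hx1, of z0 n] and S2 = tc_idmult[OF hx2, of z0 n]
  note T1 = tc_idmult[OF hA1, of z0 n] and T2 = tc_idmult[OF hA2, of z0 n]
  note I1 = ident1[of "Suc n"] and I2 = ident2[of "Suc n"]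
  show "p1 (zmL z0 \<kappa> w c (Ef (Suc n))) = p1 (stadd (stscale (-1) (Ef n)) (Gs (tc z0 (detM \<kappa> w c) (Suc n))))"
    unfolding zmL_simps using T1 by (simp add: Ef_def Gs_def stadd_def stscale_def al1_def)
  show "p2 (zmL z0 \<kappa> w c (Ef (Suc n))) = p2 (stadd (stscale (-1) (Ef n)) (Gs (tc z0 (detM \<kappa> w c) (Suc n))))"
    unfolding zmL_simps using T2 by (simp add: Ef_def Gs_def stadd_def stscale_def al2_def)
  show "xi1 (zmL z0 \<kappa> w c (Ef (Suc n))) = xi1 (stadd (stscale (-1) (Ef n)) (Gs (tc z0 (detM \<kappa> w c) (Suc n))))"
  proof -
    define T where "T = tc z0 (\<lambda>x. x * A1 x) (Suc n)"
    define T0 where "T0 = tc z0 (\<lambda>x. x * A1 x) n"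
    define D where "D = tc z0 (detM \<kappa> w c) (Suc n)"
    define X where "X = - (1 + of_real \<kappa>) * al1 (Suc n) + tc z0 (\<lambda>x. exp x * A2 x) (Suc n) + of_real \<kappa> * tc z0 (\<lambda>x. exp (- x) * A2 x) (Suc n)"
    have X: "X = (of_real c)\<^sup>2 * (z0 * T + T0) - e1 * D"
      using I1 unfolding S1 X_def T_def T0_def D_def by algebra
    have "xi1 (zmL z0 \<kappa> w c (Ef (Suc n))) = z0 * T - X / (of_real c)\<^sup>2"
      unfolding zmL_simps X_def T_def Ef_P2_pm by (simp add: Ef_def)
    also have "\<dots> = - T0 + D * e1 / (of_real c)\<^sup>2" unfolding X using c2 by (simp add: field_simps)
    also have "\<dots> = xi1 (stadd (stscale (-1) (Ef n)) (Gs (tc z0 (detM \<kappa> w c) (Suc n))))"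
      unfolding T0_def D_def by (simp add: Ef_def Gs_def stadd_def stscale_def)
    finally show ?thesis .
  qed
  show "xi2 (zmL z0 \<kappa> w c (Ef (Suc n))) = xi2 (stadd (stscale (-1) (Ef n)) (Gs (tc z0 (detM \<kappa> w c) (Suc n))))"
  proof -
    define T where "T = tc z0 (\<lambda>x. x * A2 x) (Suc n)"
    define T0 where "T0 = tc z0 (\<lambda>x. x * A2 x) n"
    define D where "D = tc z0 (detM \<kappa> w c) (Suc n)"
    define X where "X = - of_real w * (1 + of_real \<kappa>) * al2 (Suc n) + of_real w * (of_real \<kappa> * tc z0 (\<lambda>x. exp x * A1 x) (Suc n) + tc z0 (\<lambda>x. exp (- x) * A1 x) (Suc n))"
    have X: "X = (of_real c)\<^sup>2 * (z0 * T + T0) - e2 * D"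
      using I2 unfolding S2 X_def T_def T0_def D_def by algebra
    have "xi2 (zmL z0 \<kappa> w c (Ef (Suc n))) = z0 * T - X / (of_real c)\<^sup>2"
      unfolding zmL_simps X_def T_def Ef_P2_pm by (simp add: Ef_def)
    also have "\<dots> = - T0 + D * e2 / (of_real c)\<^sup>2" unfolding X using c2 by (simp add: field_simps)
    also have "\<dots> = xi2 (stadd (stscale (-1) (Ef n)) (Gs (tc z0 (detM \<kappa> w c) (Suc n))))"
      unfolding T0_def D_def by (simp add: Ef_def Gs_def stadd_def stscale_def)
    finally show ?thesis .
  qed
  show "P1 (zmL z0 \<kappa> w c (Ef (Suc n))) = P1 (stadd (stscale (-1) (Ef n)) (Gs (tc z0 (detM \<kappa> w c) (Suc n))))"
  proof
    fix v :: real
    show "P1 (zmL z0 \<kappa> w c (Ef (Suc n))) v = P1 (stadd (stscale (-1) (Ef n)) (Gs (tc z0 (detM \<kappa> w c) (Suc n)))) v"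
    proof (cases "v \<in> {-1..1}")
      case True
      show ?thesis unfolding zmL_simps using Pef_dI(1)[OF True, of al1 n] True
        by (simp add: Ef_def Gs_def stadd_def stscale_def)
    next
      case False
      have a: "dI (P1 (Ef (Suc n))) v = 0" unfolding dI_def by (rule if_not_P[OF False])
      have b: "P1 (Ef k) v = 0" for k unfolding Ef_def st.select_convs by (rule if_not_P[OF False])
      show ?thesis unfolding zmL_simps by (simp add: a b Gs_def stadd_def stscale_def)
    qed
  qed
  show "P2 (zmL z0 \<kappa> w c (Ef (Suc n))) = P2 (stadd (stscale (-1) (Ef n)) (Gs (tc z0 (detM \<kappa> w c) (Suc n))))"
  proof
    fix v :: real
    show "P2 (zmL z0 \<kappa> w c (Ef (Suc n))) v = P2 (stadd (stscale (-1) (Ef n)) (Gs (tc z0 (detM \<kappa> w c) (Suc n)))) v"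
    proof (cases "v \<in> {-1..1}")
      case True
      show ?thesis unfolding zmL_simps using Pef_dI(1)[OF True, of al2 n] True
        by (simp add: Ef_def Gs_def stadd_def stscale_def)
    next
      case False
      have a: "dI (P2 (Ef (Suc n))) v = 0" unfolding dI_def by (rule if_not_P[OF False])
      have b: "P2 (Ef k) v = 0" for k unfolding Ef_def st.select_convs by (rule if_not_P[OF False])
      show ?thesis unfolding zmL_simps by (simp add: a b Gs_def stadd_def stscale_def)
    qed
  qed
qed

lemma zmL_Ef_0:
  "zmL z0 \<kappa> w c (Ef 0) = Gs (tc z0 (detM \<kappa> w c) 0)"
proof (rule st_eqI)
  have c2: "(of_real c :: complex)\<^sup>2 \<noteq> 0" using cnz by simp
  note I1 = ident1[of 0] and I2 = ident2[of 0]
  show "p1 (zmL z0 \<kappa> w c (Ef 0)) = p1 (Gs (tc z0 (detM \<kappa> w c) 0))"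
    unfolding zmL_simps by (simp add: Ef_def Gs_def al1_def)
  show "p2 (zmL z0 \<kappa> w c (Ef 0)) = p2 (Gs (tc z0 (detM \<kappa> w c) 0))"
    unfolding zmL_simps by (simp add: Ef_def Gs_def al2_def)
  show "xi1 (zmL z0 \<kappa> w c (Ef 0)) = xi1 (Gs (tc z0 (detM \<kappa> w c) 0))"
  proof -
    define T where "T = z0 * A1 z0"
    define D where "D = tc z0 (detM \<kappa> w c) 0"
    define X where "X = - (1 + of_real \<kappa>) * al1 0 + tc z0 (\<lambda>x. exp x * A2 x) 0 + of_real \<kappa> * tc z0 (\<lambda>x. exp (- x) * A2 x) 0"
    have X: "X = (of_real c)\<^sup>2 * (z0 * T) - e1 * D"
      using I1 unfolding X_def T_def D_def tc_0 by algebra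
    have "xi1 (zmL z0 \<kappa> w c (Ef 0)) = z0 * T - X / (of_real c)\<^sup>2"
      unfolding zmL_simps X_def T_def Ef_P2_pm by (simp add: Ef_def)
    also have "\<dots> = D * e1 / (of_real c)\<^sup>2" unfolding X using c2 by (simp add: field_simps)
    also have "\<dots> = xi1 (Gs (tc z0 (detM \<kappa> w c) 0))"
      unfolding D_def by (simp add: Gs_def)
    finally show ?thesis .
  qed
  show "xi2 (zmL z0 \<kappa> w c (Ef 0)) = xi2 (Gs (tc z0 (detM \<kappa> w c) 0))"
  proof -
    define T where "T = z0 * A2 z0"
    define D where "D = tc z0 (detM \<kappa> w c) 0"
    define X where "X = - of_real w * (1 + of_real \<kappa>) * al2 0 + of_real w * (of_real \<kappa> * tc z0 (\<lambda>x. exp x * A1 x) 0 + tc z0 (\<lambda>x. exp (- x) * A1 x) 0)"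
    have X: "X = (of_real c)\<^sup>2 * (z0 * T) - e2 * D"
      using I2 unfolding X_def T_def D_def tc_0 by algebra
    have "xi2 (zmL z0 \<kappa> w c (Ef 0)) = z0 * T - X / (of_real c)\<^sup>2"
      unfolding zmL_simps X_def T_def Ef_P2_pm by (simp add: Ef_def)
    also have "\<dots> = D * e2 / (of_real c)\<^sup>2" unfolding X using c2 by (simp add: field_simps)
    also have "\<dots> = xi2 (Gs (tc z0 (detM \<kappa> w c) 0))"
      unfolding D_def by (simp add: Gs_def)
    finally show ?thesis .
  qed
  show "P1 (zmL z0 \<kappa> w c (Ef 0)) = P1 (Gs (tc z0 (detM \<kappa> w c) 0))"
  proof
    fix v :: real
    show "P1 (zmL z0 \<kappa> w c (Ef 0)) v = P1 (Gs (tc z0 (detM \<kappa> w c) 0)) v"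
    proof (cases "v \<in> {-1..1}")
      case True
      show ?thesis unfolding zmL_simps using Pef_dI(2)[OF True, of al1] True
        by (simp add: Ef_def Gs_def)
    next
      case False
      have a: "dI (P1 (Ef 0)) v = 0" unfolding dI_def by (rule if_not_P[OF False])
      have b: "P1 (Ef k) v = 0" for k unfolding Ef_def st.select_convs by (rule if_not_P[OF False])
      show ?thesis unfolding zmL_simps by (simp add: a b Gs_def)
    qed
  qed
  show "P2 (zmL z0 \<kappa> w c (Ef 0)) = P2 (Gs (tc z0 (detM \<kappa> w c) 0))"
  proof
    fix v :: real
    show "P2 (zmL z0 \<kappa> w c (Ef 0)) v = P2 (Gs (tc z0 (detM \<kappa> w c) 0)) v"
    proof (cases "v \<in> {-1..1}")
      case True
      show ?thesis unfolding zmL_simps using Pef_dI(2)[OF True, of al2] True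
        by (simp add: Ef_def Gs_def)
    next
      case False
      have a: "dI (P2 (Ef 0)) v = 0" unfolding dI_def by (rule if_not_P[OF False])
      have b: "P2 (Ef k) v = 0" for k unfolding Ef_def st.select_convs by (rule if_not_P[OF False])
      show ?thesis unfolding zmL_simps by (simp add: a b Gs_def)
    qed
  qed
qed

end


lemma stadd_zero: "stadd U stzero = U"
  by (rule st_eqI) (simp_all add: stadd_def stzero_def)

context mset
begin

definition mm :: nat where "mm = (LEAST n. tc z0 (detM \<kappa> w c) n \<noteq> 0)"

lemma mm_nz: "tc z0 (detM \<kappa> w c) mm \<noteq> 0"
  unfolding mm_def using dnz by (rule LeastI_ex)

lemma mm_lt: "k < mm \<Longrightarrow> tc z0 (detM \<kappa> w c) k = 0"
  unfolding mm_def using not_less_Least by blast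

lemma mm_pos: "0 < mm"
  using mm_nz dz by (cases mm) auto

lemma Gs_0: "Gs 0 = stzero"
  by (rule st_eqI) (simp_all add: Gs_def stzero_def)

lemma chain0: "zmL z0 \<kappa> w c (Ef 0) = stzero"
  using zmL_Ef_0 mm_lt[OF mm_pos] Gs_0 by simp

lemma chainS: "Suc n < mm \<Longrightarrow> zmL z0 \<kappa> w c (Ef (Suc n)) = stscale (-1) (Ef n)"
  using zmL_Ef_Suc[of n] mm_lt[of "Suc n"] Gs_0 stadd_zero by simp

lemma Ef_ker: "n < mm \<Longrightarrow> Ef n \<in> kerpow \<kappa> w c z0 (Suc n)"
proof (induction n)
  case 0 then show ?case using Ef_Dsp chain0 by simp
next
  case (Suc n)
  then have "Ef n \<in> kerpow \<kappa> w c z0 (Suc n)" by simp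
  then have "stscale (-1) (Ef n) \<in> kerpow \<kappa> w c z0 (Suc n)" by (rule kerpow_scale)
  then show ?case using chainS[OF Suc.prems] Ef_Dsp by simp
qed

lemma cf_Gs: "cf \<in> comps \<Longrightarrow> cf (Gs (a * b)) = a * cf (Gs b)"
  unfolding comps_def by (auto simp: Gs_def)

lemma SHIFT:
  assumes cf: "cf \<in> comps"
  shows "cf (zmL z0 \<kappa> w c (lincomb \<beta> Ef mm)) = (\<Sum>j<mm. (if Suc j < mm then - \<beta> (Suc j) else 0) * cf (Ef j))"
proof -
  obtain m' where m': "mm = Suc m'" using mm_pos by (cases mm) auto
  have "cf (zmL z0 \<kappa> w c (lincomb \<beta> Ef mm)) = (\<Sum>i<mm. \<beta> i * cf (zmL z0 \<kappa> w c (Ef i)))"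
    unfolding lincomb_zmL[OF Ef_Dsp] comp_lincomb[OF cf] ..
  also have "\<dots> = \<beta> 0 * cf (zmL z0 \<kappa> w c (Ef 0)) + (\<Sum>i<m'. \<beta> (Suc i) * cf (zmL z0 \<kappa> w c (Ef (Suc i))))"
    unfolding m' sum.lessThan_Suc_shift ..
  also have "\<dots> = (\<Sum>i<m'. - \<beta> (Suc i) * cf (Ef i))"
    using chain0 chainS comps_lin[OF cf] m' by simp
  also have "\<dots> = (\<Sum>j<mm. (if Suc j < mm then - \<beta> (Suc j) else 0) * cf (Ef j))"
    unfolding m' by simp
  finally show ?thesis .
qed

lemma indep_aux:
  "\<forall>\<beta>. (\<forall>j. r \<le> j \<longrightarrow> j < mm \<longrightarrow> \<beta> j = 0) \<longrightarrow> lincomb \<beta> Ef mm = stzero \<longrightarrow> (\<forall>j<mm. \<beta> j = 0)"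
proof (induction r)
  case 0 then show ?case by simp
next
  case (Suc r)
  show ?case
  proof (rule allI, intro impI)
    fix \<beta> :: "nat \<Rightarrow> complex"
    assume supp: "\<forall>j. Suc r \<le> j \<longrightarrow> j < mm \<longrightarrow> \<beta> j = 0" and z: "lincomb \<beta> Ef mm = stzero"
    define \<beta>' where "\<beta>' j = (if Suc j < mm then - \<beta> (Suc j) else 0)" for j
    have "lincomb \<beta>' Ef mm = stzero"
    proof (rule st_eq_comps)
      fix cf assume cf: "cf \<in> comps"
      have "cf (lincomb \<beta>' Ef mm) = cf (zmL z0 \<kappa> w c (lincomb \<beta> Ef mm))"
        unfolding SHIFT[OF cf] comp_lincomb[OF cf] \<beta>'_def ..
      also have "\<dots> = cf stzero" unfolding z zmL_stzero ..
      finally show "cf (lincomb \<beta>' Ef mm) = cf stzero" .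
    qed
    moreover have "\<forall>j. r \<le> j \<longrightarrow> j < mm \<longrightarrow> \<beta>' j = 0" using supp unfolding \<beta>'_def by auto
    ultimately have "\<forall>j<mm. \<beta>' j = 0" using Suc.IH by blast
    note b0 = this
    have hs: "\<beta> j = 0" if j0: "0 < j" and jm: "j < mm" for j
    proof -
      obtain i where j: "j = Suc i" using j0 by (cases j) auto
      have "\<beta>' i = 0" using b0 jm j by auto
      then show ?thesis using jm j unfolding \<beta>'_def by simp
    qed
    have red: "(\<Sum>j<mm. \<beta> j * X j) = \<beta> 0 * X 0" for X :: "nat \<Rightarrow> complex"
    proof -
      obtain m' where m': "mm = Suc m'" using mm_pos by (cases mm) auto
      show ?thesis unfolding m' sum.lessThan_Suc_shift using hs m' by simp
    qed
    have "\<beta> 0 * al1 0 = 0" "\<beta> 0 * al2 0 = 0"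
      using arg_cong[OF z, of p1] arg_cong[OF z, of p2]
      unfolding comp_lincomb[OF comps_simps(1)] comp_lincomb[OF comps_simps(2)] red
      by (simp_all add: Ef_def stzero_def)
    then have "\<beta> 0 = 0" using ne by (auto simp: al1_def al2_def)
    then show "\<forall>j<mm. \<beta> j = 0" using hs by (metis neq0_conv)
  qed
qed

lemma indep: "lincomb \<beta> Ef mm = stzero \<Longrightarrow> i < mm \<Longrightarrow> \<beta> i = 0"
  using indep_aux[of mm] by auto

lemma NOEXT:
  assumes W: "W \<in> Dsp" and zW: "zmL z0 \<kappa> w c W = Gs s"
  shows "s = 0"
proof -
  note ch = charA[OF W cnz, where z=z0 and \<kappa>=\<kappa> and w=w, unfolded zW]
  have c2: "(of_real c :: complex)\<^sup>2 \<noteq> 0" using cnz by simp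
  have bA: "bA \<kappa> c z0 (Gs s) = s * e1" unfolding bA_def using c2 by (simp add: Gs_def)
  have bB: "bB \<kappa> w c z0 (Gs s) = s * e2" unfolding bB_def using c2 by (simp add: Gs_def)
  define x where "x = p1 W"
  define y where "y = p2 W"
  have r1: "m11 \<kappa> w c z0 * x + m12 \<kappa> w c z0 * y = s * e1" using ch(2) bA unfolding x_def y_def by simp
  have r2: "m21 \<kappa> w c z0 * x + m22 \<kappa> w c z0 * y = s * e2" using ch(3) bB unfolding x_def y_def by simp
  have d0: "m11 \<kappa> w c z0 * m22 \<kappa> w c z0 - m12 \<kappa> w c z0 * m21 \<kappa> w c z0 = 0" using dz unfolding detM_eq .
  have "s * A1 z0 = m22 \<kappa> w c z0 * (s * e1) - m12 \<kappa> w c z0 * (s * e2)" unfolding adj1_def by (simp add: algebra_simps)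
  also have "\<dots> = (m11 \<kappa> w c z0 * m22 \<kappa> w c z0 - m12 \<kappa> w c z0 * m21 \<kappa> w c z0) * x"
    unfolding r1[symmetric] r2[symmetric] by algebra
  finally have s1: "s * A1 z0 = 0" using d0 by simp
  have "s * A2 z0 = - m21 \<kappa> w c z0 * (s * e1) + m11 \<kappa> w c z0 * (s * e2)" unfolding adj2_def by (simp add: algebra_simps)
  also have "\<dots> = (m11 \<kappa> w c z0 * m22 \<kappa> w c z0 - m12 \<kappa> w c z0 * m21 \<kappa> w c z0) * y"
    unfolding r1[symmetric] r2[symmetric] by algebra
  finally have s2: "s * A2 z0 = 0" using d0 by simp
  show "s = 0" using s1 s2 ne by auto
qed

lemma KER1:
  assumes W: "W \<in> Dsp" and zW: "zmL z0 \<kappa> w c W = stzero"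
  shows "\<exists>t. W = stscale t (Ef 0)"
proof -
  note ch = charA[OF W cnz, where z=z0 and \<kappa>=\<kappa> and w=w, unfolded zW]
  obtain t where t: "p1 W = t * A1 z0" "p2 W = t * A2 z0"
    using sp[of "p1 W" "p2 W"] ch(2,3) by auto
  have "W = stscale t (Ef 0)"
  proof (rule st_eqI)
    show "p1 W = p1 (stscale t (Ef 0))" using t by (simp add: stscale_def Ef_def al1_def)
    show "p2 W = p2 (stscale t (Ef 0))" using t by (simp add: stscale_def Ef_def al2_def)
    show "xi1 W = xi1 (stscale t (Ef 0))" using t arg_cong[OF ch(1), of xi1] by (simp add: stscale_def Ef_def Sol_def stzero_def)
    show "xi2 W = xi2 (stscale t (Ef 0))" using t arg_cong[OF ch(1), of xi2] by (simp add: stscale_def Ef_def Sol_def stzero_def)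
    show "P1 W = P1 (stscale t (Ef 0))"
    proof
      fix v show "P1 W v = P1 (stscale t (Ef 0)) v"
        using t arg_cong[OF ch(1), of "\<lambda>U. P1 U v"] by (simp add: stscale_def Ef_def Sol_def stzero_def al1_def)
    qed
    show "P2 W = P2 (stscale t (Ef 0))"
    proof
      fix v show "P2 W v = P2 (stscale t (Ef 0)) v"
        using t arg_cong[OF ch(1), of "\<lambda>U. P2 U v"] by (simp add: stscale_def Ef_def Sol_def stzero_def al2_def)
    qed
  qed
  then show ?thesis ..
qed

lemma lincomb_Ef_Dsp: "lincomb \<beta> Ef n \<in> Dsp"
  by (rule lincomb_Dsp) (rule Ef_Dsp)

lemma SPAN: "U \<in> kerpow \<kappa> w c z0 k \<Longrightarrow> \<exists>\<beta>. U = lincomb \<beta> Ef mm"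
proof (induction k arbitrary: U)
  case 0
  then have U: "U = stzero" by simp
  have "lincomb (\<lambda>_. 0) Ef mm = stzero"
    by (rule st_eq_comps) (simp add: comp_lincomb comps_lin)
  then show ?case using U by metis
next
  case (Suc k)
  then have U: "U \<in> Dsp" and zU: "zmL z0 \<kappa> w c U \<in> kerpow \<kappa> w c z0 k" by auto
  obtain \<beta> where \<beta>: "zmL z0 \<kappa> w c U = lincomb \<beta> Ef mm" using Suc.IH[OF zU] by blast
  obtain m' where m': "mm = Suc m'" using mm_pos by (cases mm) auto
  define \<gamma> where "\<gamma> j = (if j = 0 then 0 else - \<beta> (j - 1))" for j
  define V where "V = lincomb \<gamma> Ef mm"
  define B where "B = \<beta> m'"
  define D where "D = tc z0 (detM \<kappa> w c) mm"
  define W2 where "W2 = stadd U (stadd (stscale (-1) V) (stscale B (Ef mm)))"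
  have V: "V \<in> Dsp" unfolding V_def by (rule lincomb_Ef_Dsp)
  have W2: "W2 \<in> Dsp" unfolding W2_def by (intro Dsp_add Dsp_scale U V Ef_Dsp)
  have cW2: "cf W2 = cf U - cf V + B * cf (Ef mm)" if cf: "cf \<in> comps" for cf
    unfolding W2_def comps_lin[OF cf] by simp
  have EmS: "zmL z0 \<kappa> w c (Ef mm) = stadd (stscale (-1) (Ef m')) (Gs D)"
    unfolding D_def m' by (rule zmL_Ef_Suc)
  have zW2: "zmL z0 \<kappa> w c W2 = Gs (B * D)"
  proof (rule st_eq_comps)
    fix cf assume cf: "cf \<in> comps"
    have e1: "cf (zmL z0 \<kappa> w c W2) = cf (zmL z0 \<kappa> w c U) - cf (zmL z0 \<kappa> w c V) + B * cf (zmL z0 \<kappa> w c (Ef mm))"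
      unfolding W2_def zmL_add[OF U Dsp_add[OF Dsp_scale[OF V] Dsp_scale[OF Ef_Dsp]]]
        zmL_add[OF Dsp_scale[OF V] Dsp_scale[OF Ef_Dsp]] zmL_scale[OF V] zmL_scale[OF Ef_Dsp] comps_lin[OF cf]
      by simp
    have e2: "cf (zmL z0 \<kappa> w c U) = (\<Sum>j<mm. \<beta> j * cf (Ef j))" unfolding \<beta> comp_lincomb[OF cf] ..
    have e3: "cf (zmL z0 \<kappa> w c V) = (\<Sum>j<mm. (if Suc j < mm then \<beta> j else 0) * cf (Ef j))"
      unfolding V_def SHIFT[OF cf] \<gamma>_def by (rule sum.cong) auto
    have e4: "cf (zmL z0 \<kappa> w c (Ef mm)) = - cf (Ef m') + cf (Gs D)" unfolding EmS comps_lin[OF cf] by simp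
    have "(\<Sum>j<mm. \<beta> j * cf (Ef j)) - (\<Sum>j<mm. (if Suc j < mm then \<beta> j else 0) * cf (Ef j)) = B * cf (Ef m')"
      unfolding m' B_def by simp
    then have "cf (zmL z0 \<kappa> w c W2) = B * cf (Gs D)" unfolding e1 e2 e3 e4 by (simp add: algebra_simps)
    then show "cf (zmL z0 \<kappa> w c W2) = cf (Gs (B * D))" using cf_Gs[OF cf] by simp
  qed
  have "B * D = 0" by (rule NOEXT[OF W2 zW2])
  then have B0: "B = 0" using mm_nz unfolding D_def by simp
  obtain t where t: "W2 = stscale t (Ef 0)" using KER1[OF W2] zW2 B0 Gs_0 by auto
  have "U = lincomb (\<lambda>j. \<gamma> j + (if j = 0 then t else 0)) Ef mm"
  proof (rule st_eq_comps)
    fix cf assume cf: "cf \<in> comps"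
    have "cf U = cf W2 + cf V" using cW2[OF cf] B0 by simp
    also have "\<dots> = t * cf (Ef 0) + (\<Sum>j<mm. \<gamma> j * cf (Ef j))"
      unfolding t V_def comps_lin[OF cf] comp_lincomb[OF cf] ..
    also have "\<dots> = (\<Sum>j<mm. (\<gamma> j + (if j = 0 then t else 0)) * cf (Ef j))"
      using mm_pos by (simp add: distrib_right sum.distrib if_distrib[of "\<lambda>x. x * _"] sum.delta cong: if_cong)
    also have "\<dots> = cf (lincomb (\<lambda>j. \<gamma> j + (if j = 0 then t else 0)) Ef mm)"
      unfolding comp_lincomb[OF cf] ..
    finally show "cf U = cf (lincomb (\<lambda>j. \<gamma> j + (if j = 0 then t else 0)) Ef mm)" .
  qed
  then show ?case by blast
qed

lemma has_dim_gen: "has_dim (gen_eigenspace \<kappa> w c z0) mm"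
  unfolding has_dim_def gen_eigenspace_def
proof (intro exI[of _ Ef] conjI allI impI ballI)
  fix i assume "i < mm" then show "Ef i \<in> (\<Union>k. kerpow \<kappa> w c z0 k)" using Ef_ker by blast
next
  fix a :: "nat \<Rightarrow> complex" and i assume "lincomb a Ef mm = stzero" "i < mm"
  then show "a i = 0" by (rule indep)
next
  fix U assume "U \<in> (\<Union>k. kerpow \<kappa> w c z0 k)"
  then show "\<exists>a. U = lincomb a Ef mm" using SPAN by blast
qed

lemma zorder_mm: "zorder (detM \<kappa> w c) z0 = int mm"
proof (rule zorder_zero_eqI[OF hol_det open_UNIV UNIV_I])
  show "\<And>i. i < nat (int mm) \<Longrightarrow> (deriv ^^ i) (detM \<kappa> w c) z0 = 0"
    using mm_lt unfolding tc_def by simp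
  show "(deriv ^^ nat (int mm)) (detM \<kappa> w c) z0 \<noteq> 0"
    using mm_nz unfolding tc_def by simp
qed simp

end


lemma det_nonzero_point:
  assumes k: "\<kappa> > 0" and w: "w > 0" and c: "c \<noteq> 0"
  shows "\<exists>b. detM \<kappa> w c b \<noteq> 0"
proof -
  define K where "K = (1 + \<kappa>) * (1 + w)"
  have K0: "K > 0" unfolding K_def using k w by simp
  have c2: "c\<^sup>2 > 0" using c by simp
  obtain N :: nat where N: "K / c\<^sup>2 < real N" using reals_Archimedean2 by blast
  have "0 < K / c\<^sup>2" using K0 c2 by simp
  then have "0 < real N" using N by linarith
  then have N1: "real N \<ge> 1" by simp
  define r where "r = 2 * real N * pi"
  define X where "X = c\<^sup>2 * r\<^sup>2"
  define b where "b = complex_of_real r * \<i>"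
  have eb: "exp b = 1" unfolding b_def r_def by (rule exp_integer_2pi) simp
  have emb: "exp (- b) = 1" using eb by (simp add: exp_minus)
  have b2: "b\<^sup>2 = - complex_of_real (r\<^sup>2)" unfolding b_def by (simp add: power_mult_distrib)
  have NX: "X \<ge> real N * c\<^sup>2"
  proof -
    have "r\<^sup>2 = real N * (4 * pi * pi * real N)" unfolding r_def by (simp add: power2_eq_square)
    moreover have "4 * pi * pi * real N \<ge> 1"
    proof -
      have "pi * pi \<ge> 1 * 1" using pi_gt3 by (intro mult_mono) auto
      then have "pi * pi * real N \<ge> 1 * 1" using N1 by (intro mult_mono) auto
      then show ?thesis by linarith
    qed
    ultimately have "r\<^sup>2 \<ge> real N" using N1 by (simp add: mult_le_cancel_left1)
    then show ?thesis unfolding X_def using c2 by (simp add: mult.commute mult_left_mono)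
  qed
  have "real N * c\<^sup>2 > K" using N c2 by (simp add: field_simps)
  then have XK: "X > K" using NX by simp
  have "detM \<kappa> w c b = complex_of_real (X * (X - K))"
    unfolding detM_eq m11_def m12_def m21_def m22_def eb emb b2 X_def K_def
    by (simp add: algebra_simps power2_eq_square)
  moreover have "X * (X - K) \<noteq> 0" using XK K0 by simp
  ultimately have "detM \<kappa> w c b \<noteq> 0" by (simp only: of_real_eq_0_iff) simp
  then show ?thesis by blast
qed

lemma dnz_ex:
  assumes k: "\<kappa> > 0" and w: "w > 0" and c: "c \<noteq> 0"
  shows "\<exists>n. tc z0 (detM \<kappa> w c) n \<noteq> 0"
proof (rule ccontr)
  assume "\<not> (\<exists>n. tc z0 (detM \<kappa> w c) n \<noteq> 0)"
  then have "\<And>n. (deriv ^^ n) (detM \<kappa> w c) z0 = 0" unfolding tc_def by simp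
  moreover obtain b where "detM \<kappa> w c b \<noteq> 0" using det_nonzero_point[OF k w c] by blast
  ultimately show False
    using holomorphic_fun_eq_0_on_connected[OF hol_det open_UNIV connected_UNIV, where z=z0 and w=b] by auto
qed

lemma eigen_det:
  assumes c: "c \<noteq> 0" and e: "eigenvalue_L \<kappa> w c z"
  shows "detM \<kappa> w c z = 0"
proof (rule ccontr)
  assume d: "detM \<kappa> w c z \<noteq> 0"
  obtain U where U: "U \<in> Dsp" "U \<noteq> stzero" "zmL z \<kappa> w c U = stzero" using e unfolding eigen_iff by blast
  have "z \<in> resolvent_set \<kappa> w c" by (rule det_ne_resolvent[OF c d])
  then have "\<exists>!V. V \<in> Dsp \<and> zmL z \<kappa> w c V = stzero"
    unfolding resolvent_set_def using stzero_Xsp by blast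
  then show False using U stzero_Dsp zmL_stzero by blast
qed

lemma not_limpt:
  assumes k: "\<kappa> > 0" and w: "w > 0" and c: "c \<noteq> 0" and d: "detM \<kappa> w c z = 0"
  shows "\<not> z islimpt {z. detM \<kappa> w c z = 0}"
proof
  assume l: "z islimpt {z. detM \<kappa> w c z = 0}"
  obtain b where b: "detM \<kappa> w c b \<noteq> 0" using det_nonzero_point[OF k w c] by blast
  obtain r where r: "0 < r" "\<And>x. x \<in> ball z r - {z} \<Longrightarrow> detM \<kappa> w c x \<noteq> 0"
    using isolated_zeros[OF hol_det open_UNIV connected_UNIV UNIV_I d UNIV_I b] by metis
  obtain x where "x \<in> {z. detM \<kappa> w c z = 0}" "x \<noteq> z" "dist x z < r"
    using l r(1) unfolding islimpt_approachable by blast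
  then show False using r(2)[of x] by (auto simp: dist_commute)
qed

lemma det_cnj: "detM \<kappa> w c (cnj z) = cnj (detM \<kappa> w c z)"
  unfolding detM_eq m11_def m12_def m21_def m22_def by (simp add: exp_cnj)

lemma det_neg: "detM \<kappa> w c (- z) = detM \<kappa> w c z"
  unfolding detM_formula by simp

lemma alg_mult:
  assumes k: "\<kappa> > 0" and w: "w > 0" and c: "\<bar>c\<bar> > 1" and d: "detM \<kappa> w c z = 0"
  shows "\<exists>n. algebraic_multiplicity_is \<kappa> w c z n \<and> int n = zorder (detM \<kappa> w c) z"
proof -
  have c0: "c \<noteq> 0" using c by auto
  obtain e1 e2 where ne: "adj1 \<kappa> w c e1 e2 z \<noteq> 0 \<or> adj2 \<kappa> w c e1 e2 z \<noteq> 0"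
    and sp: "\<And>x y. m11 \<kappa> w c z * x + m12 \<kappa> w c z * y = 0 \<and> m21 \<kappa> w c z * x + m22 \<kappa> w c z * y = 0 \<Longrightarrow>
        (\<exists>t. x = t * adj1 \<kappa> w c e1 e2 z \<and> y = t * adj2 \<kappa> w c e1 e2 z)"
    using adj_choice[OF k w c, of z] by blast
  interpret M: mset \<kappa> w c z e1 e2
    by unfold_locales (use c0 d ne sp dnz_ex[OF k w c0] in auto)
  show ?thesis
    using M.has_dim_gen M.zorder_mm unfolding algebraic_multiplicity_is_def by auto
qed

lemma res_formula:
  assumes c: "c \<noteq> 0" and z: "z \<in> resolvent_set \<kappa> w c" and U: "U \<in> Xsp"
  shows "let d = detM \<kappa> w c z; c2 = (of_real c)\<^sup>2; k = of_real \<kappa>; w' = of_real w;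
               A = c2 * xi1 U + c2 * z * p1 U + Iz z (P2 U) 1 + k * Iz z (P2 U) (-1);
               B = c2 * xi2 U + c2 * z * p2 U + k * w' * Iz z (P1 U) 1 + w' * Iz z (P1 U) (-1);
               R = Res \<kappa> w c z U
           in p1 R = (c2 * z\<^sup>2 + w' * (1 + k)) / d * A + (exp z + k * exp (- z)) / d * B
            \<and> p2 R = w' * (k * exp z + exp (- z)) / d * A + (c2 * z\<^sup>2 + 1 + k) / d * B
            \<and> xi1 R = z * p1 R - p1 U
            \<and> xi2 R = z * p2 R - p2 U
            \<and> (\<forall>v\<in>{-1..1}. P1 R v = exp (z * of_real v) * p1 R + Iz z (P1 U) v)
            \<and> (\<forall>v\<in>{-1..1}. P2 R v = exp (z * of_real v) * p2 R + Iz z (P2 U) v)"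
proof -
  have d: "detM \<kappa> w c z \<noteq> 0" using z resolvent_eq[OF c] by blast
  have ex: "\<exists>!V. V \<in> Dsp \<and> zmL z \<kappa> w c V = U" using z U unfolding resolvent_set_def by blast
  define R where "R = Res \<kappa> w c z U"
  have R: "R \<in> Dsp \<and> zmL z \<kappa> w c R = U" unfolding R_def Res_def by (rule theI'[OF ex])
  have RS: "R = Sol z (q1sol \<kappa> w c z U) (q2sol \<kappa> w c z U) U"
    using Sol_eq_unique[OF c d, of R] R by simp
  have p1R: "p1 R = q1sol \<kappa> w c z U" by (subst RS) (simp add: Sol_def)
  have p2R: "p2 R = q2sol \<kappa> w c z U" by (subst RS) (simp add: Sol_def)
  show ?thesis
    unfolding Let_def R_def[symmetric] bA_def[symmetric] bB_def[symmetric]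
  proof (intro conjI ballI)
    show "p1 R = ((of_real c)\<^sup>2 * z\<^sup>2 + of_real w * (1 + of_real \<kappa>)) / detM \<kappa> w c z * bA \<kappa> c z U
       + (exp z + of_real \<kappa> * exp (- z)) / detM \<kappa> w c z * bB \<kappa> w c z U"
      unfolding p1R q1sol_def m22_def m12_def by (simp add: divide_inverse algebra_simps)
    show "p2 R = of_real w * (of_real \<kappa> * exp z + exp (- z)) / detM \<kappa> w c z * bA \<kappa> c z U
       + ((of_real c)\<^sup>2 * z\<^sup>2 + 1 + of_real \<kappa>) / detM \<kappa> w c z * bB \<kappa> w c z U"
      unfolding p2R q2sol_def m11_def m21_def by (simp add: divide_inverse algebra_simps)
    show "xi1 R = z * p1 R - p1 U" by (subst (1 2) RS) (simp add: Sol_def)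
    show "xi2 R = z * p2 R - p2 U" by (subst (1 2) RS) (simp add: Sol_def)
    fix v :: real assume v: "v \<in> {-1..1}"
    show "P1 R v = exp (z * of_real v) * p1 R + Iz z (P1 U) v"
      using arg_cong[OF RS, of "\<lambda>X. P1 X v"] v p1R by (simp add: Sol_def)
    show "P2 R v = exp (z * of_real v) * p2 R + Iz z (P2 U) v"
      using arg_cong[OF RS, of "\<lambda>X. P2 X v"] v p2R by (simp add: Sol_def)
  qed
qed

theorem proposition3p1:
  fixes \<kappa> w c :: real
  assumes "\<kappa> > 0" and "w > 0" and "c \<noteq> 0"
  shows "spectrum_L \<kappa> w c = {z. detM \<kappa> w c z = 0}
    \<and> (\<forall>z. detM \<kappa> w c z = (of_real c)^4 * z^4
             + (of_real c)\<^sup>2 * (1 + of_real \<kappa>) * (1 + of_real w) * z\<^sup>2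
             + 2 * of_real \<kappa> * of_real w * (1 - cosh (2 * z)))
    \<and> (\<bar>c\<bar> > 1 \<longrightarrow>
        (\<forall>z\<in>spectrum_L \<kappa> w c. eigenvalue_L \<kappa> w c z)
      \<and> (\<forall>z. eigenvalue_L \<kappa> w c z \<longrightarrow>
            \<not> z islimpt spectrum_L \<kappa> w c
            \<and> (\<exists>n. algebraic_multiplicity_is \<kappa> w c z n \<and> int n = zorder (detM \<kappa> w c) z))
      \<and> (\<forall>z. eigenvalue_L \<kappa> w c z \<longrightarrow> geometrically_simple \<kappa> w c z)
      \<and> (\<forall>z\<in>spectrum_L \<kappa> w c. cnj z \<in> spectrum_L \<kappa> w c \<and> - z \<in> spectrum_L \<kappa> w c)
      \<and> (\<forall>z\<in>resolvent_set \<kappa> w c. \<forall>U\<in>Xsp.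
           let d = detM \<kappa> w c z; c2 = (of_real c)\<^sup>2; k = of_real \<kappa>; w' = of_real w;
               A = c2 * xi1 U + c2 * z * p1 U + Iz z (P2 U) 1 + k * Iz z (P2 U) (-1);
               B = c2 * xi2 U + c2 * z * p2 U + k * w' * Iz z (P1 U) 1 + w' * Iz z (P1 U) (-1);
               R = Res \<kappa> w c z U
           in p1 R = (c2 * z\<^sup>2 + w' * (1 + k)) / d * A + (exp z + k * exp (- z)) / d * B
            \<and> p2 R = w' * (k * exp z + exp (- z)) / d * A + (c2 * z\<^sup>2 + 1 + k) / d * B
            \<and> xi1 R = z * p1 R - p1 U
            \<and> xi2 R = z * p2 R - p2 U
            \<and> (\<forall>v\<in>{-1..1}. P1 R v = exp (z * of_real v) * p1 R + Iz z (P1 U) v)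
            \<and> (\<forall>v\<in>{-1..1}. P2 R v = exp (z * of_real v) * p2 R + Iz z (P2 U) v)))"
proof -
  have c0: "c \<noteq> 0" by fact
  note spec = spectrum_eq[OF c0, of \<kappa> w]
  show ?thesis
  proof (intro conjI allI impI ballI)
    show "spectrum_L \<kappa> w c = {z. detM \<kappa> w c z = 0}" by (rule spec)
    fix z show "detM \<kappa> w c z = (of_real c)^4 * z^4
             + (of_real c)\<^sup>2 * (1 + of_real \<kappa>) * (1 + of_real w) * z\<^sup>2
             + 2 * of_real \<kappa> * of_real w * (1 - cosh (2 * z))" by (rule detM_formula)
  next
    fix z assume c1: "\<bar>c\<bar> > 1" and "z \<in> spectrum_L \<kappa> w c"
    then have "detM \<kappa> w c z = 0" using spec by simp
    then show "eigenvalue_L \<kappa> w c z" unfolding eigen_iff by (rule det_zero_eigen[OF c0])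
  next
    fix z assume c1: "\<bar>c\<bar> > 1" and e: "eigenvalue_L \<kappa> w c z"
    have d: "detM \<kappa> w c z = 0" by (rule eigen_det[OF c0 e])
    show "\<not> z islimpt spectrum_L \<kappa> w c" unfolding spec by (rule not_limpt[OF assms d])
    show "\<exists>n. algebraic_multiplicity_is \<kappa> w c z n \<and> int n = zorder (detM \<kappa> w c) z"
      by (rule alg_mult[OF assms(1,2) c1 d])
  next
    fix z assume c1: "\<bar>c\<bar> > 1" and e: "eigenvalue_L \<kappa> w c z"
    have d: "detM \<kappa> w c z = 0" by (rule eigen_det[OF c0 e])
    show "geometrically_simple \<kappa> w c z" by (rule geom_simple[OF assms(1,2) c1 d])
  next
    fix z assume c1: "\<bar>c\<bar> > 1" and "z \<in> spectrum_L \<kappa> w c"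
    then have d: "detM \<kappa> w c z = 0" using spec by simp
    show "cnj z \<in> spectrum_L \<kappa> w c" unfolding spec using d det_cnj[of \<kappa> w c z] by simp
    show "- z \<in> spectrum_L \<kappa> w c" unfolding spec using d det_neg[of \<kappa> w c z] by simp
  next
    fix z U assume c1: "\<bar>c\<bar> > 1" and z: "z \<in> resolvent_set \<kappa> w c" and U: "U \<in> Xsp"
    show "let d = detM \<kappa> w c z; c2 = (of_real c)\<^sup>2; k = of_real \<kappa>; w' = of_real w;
               A = c2 * xi1 U + c2 * z * p1 U + Iz z (P2 U) 1 + k * Iz z (P2 U) (-1);
               B = c2 * xi2 U + c2 * z * p2 U + k * w' * Iz z (P1 U) 1 + w' * Iz z (P1 U) (-1);
               R = Res \<kappa> w c z U
           in p1 R = (c2 * z\<^sup>2 + w' * (1 + k)) / d * A + (exp z + k * exp (- z)) / d * B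
            \<and> p2 R = w' * (k * exp z + exp (- z)) / d * A + (c2 * z\<^sup>2 + 1 + k) / d * B
            \<and> xi1 R = z * p1 R - p1 U
            \<and> xi2 R = z * p2 R - p2 U
            \<and> (\<forall>v\<in>{-1..1}. P1 R v = exp (z * of_real v) * p1 R + Iz z (P1 U) v)
            \<and> (\<forall>v\<in>{-1..1}. P2 R v = exp (z * of_real v) * p2 R + Iz z (P2 U) v)"
      by (rule res_formula[OF c0 z U])
  qed
qed


end
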